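(* Let $G$ and $H$ be rooted graphs. For any integers $g,h,k\ge 0$ and $m\ge 2$, \[ X_{S^{ghk}(G,H,C_m)}=(m-1)\,X_{S^{gh}_{k+m-1}(G,H)}-\sum_{l=1}^{m-2}X_{S^{gh}_{k+l-1}(G,H)}\,X_{C_{m-l}}. \]
   Context: All graphs are finite simple graphs. The chromatic symmetric function of a graph $G$ is $X_G=\sum_{\kappa}\prod_{v\in V(G)}x_{\kappa(v)}$, where $\kappa$ ranges over proper colorings $\kappa:V(G)\to\{1,2,\dots\}$. $C_m$ is the cycle on $m$ vertices for $m\ge3$, $C_2:=K_2$, rooted at any vertex. For nonnegative integers $\tau_1,\tau_2,\tau_3$ and rooted graphs $(G_i,u_i)$, $S^{\tau_1\tau_2\tau_3}(G_1,G_2,G_3)$ is obtained by taking a center vertex $c$ and three paths from $c$, disjoint except at $c$, of lengths $\tau_1,\tau_2,\tau_3$, and identifying $u_i$ with the far end of the $i$-th path (with $c$ itself if $\tau_i=0$), the $G_i$ being disjoint. $S^{gh}_{j}(G,H)$ denotes $S^{ghj}(G,H,K_1)$, i.e., the third leg is a plain path of length $j$ ending in a leaf. *)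

theory Defs
  imports Main
begin

type_synonym 'a graph = "'a set \<times> 'a set set"

definition simple_graph :: "'a graph \<Rightarrow> bool" where
  "simple_graph G \<longleftrightarrow> finite (fst G) \<and>
     (\<forall>e\<in>snd G. \<exists>x y. e = {x, y} \<and> x \<noteq> y \<and> x \<in> fst G \<and> y \<in> fst G)"

type_synonym 'a rgraph = "'a graph \<times> 'a"

definition rooted_graph :: "'a rgraph \<Rightarrow> bool" where
  "rooted_graph Gu \<longleftrightarrow> simple_graph (fst Gu) \<and> snd Gu \<in> fst (fst Gu)"

text \<open>Symmetric functions (formal power series in x_1, x_2, ...) represented by their
coefficient function on monomials; a monomial is an exponent vector nat => nat
(colour c corresponds to variable x_c).\<close>
type_synonym sfun = "(nat \<Rightarrow> nat) \<Rightarrow> int"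

definition sf_mult :: "sfun \<Rightarrow> sfun \<Rightarrow> sfun" where
  "sf_mult f g = (\<lambda>\<alpha>. \<Sum>\<beta>\<in>{\<beta>. \<forall>c. \<beta> c \<le> \<alpha> c}. f \<beta> * g (\<lambda>c. \<alpha> c - \<beta> c))"

definition proper_colorings :: "'a graph \<Rightarrow> ('a \<Rightarrow> nat) set" where
  "proper_colorings G = {\<kappa>. (\<forall>v\<in>fst G. 1 \<le> \<kappa> v) \<and> (\<forall>v. v \<notin> fst G \<longrightarrow> \<kappa> v = 0) \<and>
      (\<forall>x y. {x, y} \<in> snd G \<longrightarrow> x \<noteq> y \<longrightarrow> \<kappa> x \<noteq> \<kappa> y)}"

definition chrom_sym :: "'a graph \<Rightarrow> sfun" where
  "chrom_sym G = (\<lambda>\<alpha>. int (card {\<kappa> \<in> proper_colorings G.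
        \<forall>c. \<alpha> c = card {v \<in> fst G. \<kappa> v = c}}))"

text \<open>Cycle C_m (m >= 3), with C_2 = K_2, rooted at vertex 0; and K_1.\<close>
definition cycle_graph :: "nat \<Rightarrow> nat rgraph" where
  "cycle_graph m = (({0..<m}, {{i, Suc i mod m} | i. i < m}), 0)"

definition K1 :: "unit rgraph" where
  "K1 = (({()}, {}), ())"

text \<open>Vertices of the spider: the centre, leg vertices Leg i j (leg i, distance j >= 1 from
the centre, 1 <= j <= tau_i), and the vertices of the three attached graphs.
The root u_i of G_i is identified with the far end of leg i (the centre if tau_i = 0).\<close>
datatype ('a, 'b, 'c) spv = Ctr | Leg nat nat | In1 'a | In2 'b | In3 'c

definition legpos :: "nat \<Rightarrow> nat \<Rightarrow> ('a, 'b, 'c) spv" where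
  "legpos i j = (if j = 0 then Ctr else Leg i j)"

definition sp_emb :: "('d \<Rightarrow> ('a, 'b, 'c) spv) \<Rightarrow> nat \<Rightarrow> nat \<Rightarrow> 'd \<Rightarrow> 'd \<Rightarrow> ('a, 'b, 'c) spv" where
  "sp_emb f i t u v = (if v = u then legpos i t else f v)"

definition leg_verts :: "nat \<Rightarrow> nat \<Rightarrow> ('a, 'b, 'c) spv set" where
  "leg_verts i t = {Leg i j | j. 1 \<le> j \<and> j \<le> t}"

definition leg_edges :: "nat \<Rightarrow> nat \<Rightarrow> ('a, 'b, 'c) spv set set" where
  "leg_edges i t = {{legpos i j, legpos i (Suc j)} | j. j < t}"

definition spider :: "nat \<Rightarrow> nat \<Rightarrow> nat \<Rightarrow> 'a rgraph \<Rightarrow> 'b rgraph \<Rightarrow> 'c rgraph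
    \<Rightarrow> ('a, 'b, 'c) spv graph" where
  "spider t1 t2 t3 G1 G2 G3 =
    (let e1 = sp_emb In1 1 t1 (snd G1); e2 = sp_emb In2 2 t2 (snd G2); e3 = sp_emb In3 3 t3 (snd G3)
     in ({Ctr} \<union> leg_verts 1 t1 \<union> leg_verts 2 t2 \<union> leg_verts 3 t3
           \<union> e1 ` fst (fst G1) \<union> e2 ` fst (fst G2) \<union> e3 ` fst (fst G3),
         leg_edges 1 t1 \<union> leg_edges 2 t2 \<union> leg_edges 3 t3
           \<union> (\<lambda>e. e1 ` e) ` snd (fst G1) \<union> (\<lambda>e. e2 ` e) ` snd (fst G2)
           \<union> (\<lambda>e. e3 ` e) ` snd (fst G3)))"

definition spider2 :: "nat \<Rightarrow> nat \<Rightarrow> nat \<Rightarrow> 'a rgraph \<Rightarrow> 'b rgraph \<Rightarrow> ('a, 'b, unit) spv graph" where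
  "spider2 g h j G H = spider g h j G H K1"

end

theory Submission
  imports Defs
begin

definition wt :: "'v set \<Rightarrow> ('v \<Rightarrow> nat) \<Rightarrow> nat \<Rightarrow> nat" where
  "wt W \<kappa> = (\<lambda>c. card {v \<in> W. \<kappa> v = c})"

lemma chrom_sym_alt:
  "chrom_sym G \<alpha> = int (card {\<kappa> \<in> proper_colorings G. wt (fst G) \<kappa> = \<alpha>})"
  unfolding chrom_sym_def wt_def
  by (rule arg_cong[where f="\<lambda>S. int (card S)"]) (auto simp: fun_eq_iff)

lemma finite_wt_set:
  assumes W: "finite W"
  shows "finite {\<kappa>. (\<forall>v. v \<notin> W \<longrightarrow> \<kappa> v = 0) \<and> wt W \<kappa> = \<alpha>}" (is "finite ?S")
proof (cases "?S = {}")
  case False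
  then obtain \<kappa>0 where k0: "\<kappa>0 \<in> ?S" by blast
  define C where "C = \<kappa>0 ` W"
  have fC: "finite C" using W by (simp add: C_def)
  have sub: "?S \<subseteq> {f. \<forall>x. (x \<in> W \<longrightarrow> f x \<in> C) \<and> (x \<notin> W \<longrightarrow> f x = 0)}"
  proof (rule subsetI)
    fix \<kappa> assume "\<kappa> \<in> ?S"
    hence a: "\<forall>v. v \<notin> W \<longrightarrow> \<kappa> v = 0" "wt W \<kappa> = \<alpha>" by auto
    have "\<kappa> x \<in> C" if xW: "x \<in> W" for x
    proof -
      have "\<alpha> (\<kappa> x) = card {v \<in> W. \<kappa> v = \<kappa> x}" using a(2) by (auto simp: wt_def)
      also have "\<dots> > 0" using xW W by (subst card_gt_0_iff) auto
      finally have "\<alpha> (\<kappa> x) > 0" .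
      hence "wt W \<kappa>0 (\<kappa> x) > 0" using k0 by simp
      hence "{v \<in> W. \<kappa>0 v = \<kappa> x} \<noteq> {}" unfolding wt_def by (metis card.empty less_irrefl)
      then obtain w where "w \<in> W" "\<kappa>0 w = \<kappa> x" by auto
      thus "\<kappa> x \<in> C" unfolding C_def by (metis image_eqI)
    qed
    thus "\<kappa> \<in> {f. \<forall>x. (x \<in> W \<longrightarrow> f x \<in> C) \<and> (x \<notin> W \<longrightarrow> f x = 0)}" using a by auto
  qed
  show ?thesis by (rule finite_subset[OF sub finite_set_of_finite_funs[OF W fC]])
next
  case True
  show ?thesis by (subst True) (rule finite.emptyI)
qed

definition ec :: "'v set set \<Rightarrow> ('v \<Rightarrow> nat) \<Rightarrow> bool" where
  "ec E \<kappa> \<longleftrightarrow> (\<forall>x y. {x, y} \<in> E \<longrightarrow> x \<noteq> y \<longrightarrow> \<kappa> x \<noteq> \<kappa> y)"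

lemma proper_alt: "\<kappa> \<in> proper_colorings G \<longleftrightarrow>
   (\<forall>v\<in>fst G. 1 \<le> \<kappa> v) \<and> (\<forall>v. v \<notin> fst G \<longrightarrow> \<kappa> v = 0) \<and> ec (snd G) \<kappa>"
  unfolding proper_colorings_def ec_def by auto

lemma ec_Un[simp]: "ec (A \<union> B) \<kappa> \<longleftrightarrow> ec A \<kappa> \<and> ec B \<kappa>"
  unfolding ec_def by blast

lemma ec_empty[simp]: "ec {} \<kappa>"
  unfolding ec_def by blast

lemma ec_pairs: "ec ((\<lambda>i. {a i, b i}) ` S) \<kappa> \<longleftrightarrow> (\<forall>i\<in>S. a i \<noteq> b i \<longrightarrow> \<kappa> (a i) \<noteq> \<kappa> (b i))"
  unfolding ec_def
proof (intro iffI ballI impI allI)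
  fix i assume H: "\<forall>x y. {x, y} \<in> (\<lambda>i. {a i, b i}) ` S \<longrightarrow> x \<noteq> y \<longrightarrow> \<kappa> x \<noteq> \<kappa> y"
    and i: "i \<in> S" "a i \<noteq> b i"
  have "{a i, b i} \<in> (\<lambda>i. {a i, b i}) ` S" using i by blast
  thus "\<kappa> (a i) \<noteq> \<kappa> (b i)" using H i by blast
next
  fix x y assume H: "\<forall>i\<in>S. a i \<noteq> b i \<longrightarrow> \<kappa> (a i) \<noteq> \<kappa> (b i)"
    and xy: "{x, y} \<in> (\<lambda>i. {a i, b i}) ` S" "x \<noteq> y"
  then obtain i where i: "i \<in> S" "{x, y} = {a i, b i}" by blast
  hence "(x = a i \<and> y = b i) \<or> (x = b i \<and> y = a i)" by (simp add: doubleton_eq_iff)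
  thus "\<kappa> x \<noteq> \<kappa> y" using H i xy(2) by auto
qed

lemma ec_single: "ec {{a, b}} \<kappa> \<longleftrightarrow> (a \<noteq> b \<longrightarrow> \<kappa> a \<noteq> \<kappa> b)"
proof -
  have "{{a, b}} = (\<lambda>i::unit. {a, b}) ` UNIV" by simp
  thus ?thesis using ec_pairs[of "\<lambda>_. a" "\<lambda>_. b" UNIV \<kappa>] by simp
qed

lemma ec_image_inj:
  assumes "inj f"
  shows "ec ((\<lambda>e. f ` e) ` E) \<kappa> \<longleftrightarrow> ec E (\<kappa> \<circ> f)"
proof
  assume H: "ec ((\<lambda>e. f ` e) ` E) \<kappa>"
  show "ec E (\<kappa> \<circ> f)" unfolding ec_def
  proof (intro allI impI)
    fix x y assume "{x, y} \<in> E" "x \<noteq> y"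
    have "f ` {x, y} \<in> (\<lambda>e. f ` e) ` E" using \<open>{x, y} \<in> E\<close> by (rule imageI)
    hence "{f x, f y} \<in> (\<lambda>e. f ` e) ` E" by simp
    moreover have "f x \<noteq> f y" using assms \<open>x \<noteq> y\<close> by (simp add: inj_eq)
    ultimately show "(\<kappa> \<circ> f) x \<noteq> (\<kappa> \<circ> f) y" using H unfolding ec_def by auto
  qed
next
  assume H: "ec E (\<kappa> \<circ> f)"
  show "ec ((\<lambda>e. f ` e) ` E) \<kappa>" unfolding ec_def
  proof (intro allI impI)
    fix p q assume pq: "{p, q} \<in> (\<lambda>e. f ` e) ` E" "p \<noteq> q"
    then obtain e where e: "e \<in> E" "{p, q} = f ` e" by auto
    have "p \<in> f ` e" "q \<in> f ` e" using e(2) by blast+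
    then obtain a b where ab: "a \<in> e" "b \<in> e" "p = f a" "q = f b" by blast
    have "e = {a, b}"
    proof
      show "e \<subseteq> {a, b}"
      proof
        fix c assume "c \<in> e"
        hence "f c \<in> {p, q}" using e by auto
        thus "c \<in> {a, b}" using ab assms by (auto simp: inj_eq)
      qed
    qed (use ab in auto)
    moreover have "a \<noteq> b" using ab pq by auto
    ultimately show "\<kappa> p \<noteq> \<kappa> q" using H e ab unfolding ec_def by auto
  qed
qed

lemma ec_image:
  assumes sg: "\<forall>e\<in>E. \<exists>x y. e = {x, y} \<and> x \<noteq> y \<and> x \<in> V \<and> y \<in> V"
    and inj: "inj_on f V"
  shows "ec ((\<lambda>e. f ` e) ` E) \<kappa> \<longleftrightarrow> ec E (\<kappa> \<circ> f)"
proof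
  assume H: "ec ((\<lambda>e. f ` e) ` E) \<kappa>"
  show "ec E (\<kappa> \<circ> f)" unfolding ec_def
  proof (intro allI impI)
    fix x y assume xy: "{x, y} \<in> E" "x \<noteq> y"
    have "\<exists>a b. {x, y} = {a, b} \<and> a \<noteq> b \<and> a \<in> V \<and> b \<in> V" using sg xy(1) by (rule bspec)
    then obtain a b where "{x, y} = {a, b}" "a \<in> V" "b \<in> V" by blast
    hence "x \<in> V" "y \<in> V" by (auto simp: doubleton_eq_iff)
    have "f ` {x, y} \<in> (\<lambda>e. f ` e) ` E" using xy(1) by (rule imageI)
    hence "{f x, f y} \<in> (\<lambda>e. f ` e) ` E" by simp
    moreover have "f x \<noteq> f y" using xy(2) inj \<open>x \<in> V\<close> \<open>y \<in> V\<close> by (simp add: inj_on_eq_iff)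
    ultimately show "(\<kappa> \<circ> f) x \<noteq> (\<kappa> \<circ> f) y" using H unfolding ec_def by auto
  qed
next
  assume H: "ec E (\<kappa> \<circ> f)"
  show "ec ((\<lambda>e. f ` e) ` E) \<kappa>" unfolding ec_def
  proof (intro allI impI)
    fix p q assume pq: "{p, q} \<in> (\<lambda>e. f ` e) ` E" "p \<noteq> q"
    then obtain e where e: "e \<in> E" "{p, q} = f ` e" by auto
    have "\<exists>a b. e = {a, b} \<and> a \<noteq> b \<and> a \<in> V \<and> b \<in> V" using sg e(1) by (rule bspec)
    then obtain a b where ab: "e = {a, b}" "a \<noteq> b" "a \<in> V" "b \<in> V" by blast
    have "{p, q} = {f a, f b}" using e(2) ab(1) by simp
    moreover have "{a, b} \<in> E" using e(1) ab(1) by simp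
    hence "\<kappa> (f a) \<noteq> \<kappa> (f b)" using H ab(2) unfolding ec_def by simp
    ultimately show "\<kappa> p \<noteq> \<kappa> q" by (auto simp: doubleton_eq_iff)
  qed
qed

lemma ec_cong:
  assumes sg: "\<forall>e\<in>E. \<exists>x y. e = {x, y} \<and> x \<noteq> y \<and> x \<in> V \<and> y \<in> V"
    and eq: "\<forall>x\<in>V. \<kappa>1 x = \<kappa>2 x"
  shows "ec E \<kappa>1 \<longleftrightarrow> ec E \<kappa>2"
proof -
  have V: "x \<in> V \<and> y \<in> V" if "{x, y} \<in> E" "x \<noteq> y" for x y
  proof -
    have "\<exists>a b. {x, y} = {a, b} \<and> a \<noteq> b \<and> a \<in> V \<and> b \<in> V" using sg that(1) by (rule bspec)
    then obtain a b where "{x, y} = {a, b}" "a \<in> V" "b \<in> V" by blast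
    thus ?thesis by (auto simp: doubleton_eq_iff)
  qed
  have "(\<kappa>1 x \<noteq> \<kappa>1 y) = (\<kappa>2 x \<noteq> \<kappa>2 y)" if "{x, y} \<in> E" "x \<noteq> y" for x y
    using V[OF that] eq by simp
  thus ?thesis unfolding ec_def by blast
qed

lemma chrom_image:
  assumes sg: "simple_graph G" and inj: "inj_on f (fst G)"
  shows "chrom_sym (f ` fst G, (\<lambda>e. f ` e) ` snd G) = chrom_sym G"
proof
  fix \<alpha>
  define V where "V = fst G"
  define E where "E = snd G"
  have G: "G = (V, E)" by (simp add: V_def E_def)
  have sgE: "\<forall>e\<in>E. \<exists>x y. e = {x, y} \<and> x \<noteq> y \<and> x \<in> V \<and> y \<in> V"
    using sg unfolding simple_graph_def V_def E_def by blast
  have injV: "inj_on f V" using inj by (simp add: V_def)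
  define h where "h \<kappa> = (\<lambda>x. if x \<in> V then \<kappa> (f x) else (0::nat))" for \<kappa> :: "_ \<Rightarrow> nat"
  define g where "g \<kappa> = (\<lambda>y. if y \<in> f ` V then \<kappa> (inv_into V f y) else (0::nat))" for \<kappa> :: "_ \<Rightarrow> nat"
  have wt_eq: "wt (f ` V) \<kappa> = wt V (h \<kappa>)" for \<kappa>
  proof
    fix c
    have "{y \<in> f ` V. \<kappa> y = c} = f ` {x \<in> V. \<kappa> (f x) = c}" by auto
    moreover have "inj_on f {x \<in> V. \<kappa> (f x) = c}" by (rule inj_on_subset[OF injV]) auto
    moreover have "{x \<in> V. h \<kappa> x = c} = {x \<in> V. \<kappa> (f x) = c}" by (auto simp: h_def)
    ultimately show "wt (f ` V) \<kappa> c = wt V (h \<kappa>) c" unfolding wt_def by (simp add: card_image)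
  qed
  have ec_eq: "ec ((\<lambda>e. f ` e) ` E) \<kappa> \<longleftrightarrow> ec E (h \<kappa>)" for \<kappa>
    using ec_image[OF sgE injV] ec_cong[OF sgE, of "\<kappa> \<circ> f" "h \<kappa>"] by (simp add: h_def)
  let ?A = "{\<kappa> \<in> proper_colorings (f ` V, (\<lambda>e. f ` e) ` E). wt (f ` V) \<kappa> = \<alpha>}"
  let ?B = "{\<kappa> \<in> proper_colorings (V, E). wt V \<kappa> = \<alpha>}"
  have hA: "h \<kappa> \<in> ?B" if k: "\<kappa> \<in> ?A" for \<kappa>
  proof -
    have "ec E (h \<kappa>)" using k ec_eq by (simp add: proper_alt)
    moreover have "\<forall>v\<in>V. 1 \<le> h \<kappa> v" using k by (simp add: proper_alt h_def)
    moreover have "\<forall>v. v \<notin> V \<longrightarrow> h \<kappa> v = 0" by (simp add: h_def)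
    moreover have "wt V (h \<kappa>) = \<alpha>" using k wt_eq by simp
    ultimately show ?thesis by (simp add: proper_alt)
  qed
  have hg: "h (g \<kappa>) = \<kappa>" if k: "\<forall>v. v \<notin> V \<longrightarrow> \<kappa> v = 0" for \<kappa>
  proof
    fix x show "h (g \<kappa>) x = \<kappa> x"
      using k injV by (cases "x \<in> V") (simp_all add: g_def h_def)
  qed
  have gh: "g (h \<kappa>) = \<kappa>" if k: "\<forall>v. v \<notin> f ` V \<longrightarrow> \<kappa> v = 0" for \<kappa>
  proof
    fix y show "g (h \<kappa>) y = \<kappa> y"
      using k by (cases "y \<in> f ` V") (simp_all add: g_def h_def f_inv_into_f inv_into_into)
  qed
  have gB: "g \<kappa> \<in> ?A" if k: "\<kappa> \<in> ?B" for \<kappa>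
  proof -
    have k0: "\<forall>v. v \<notin> V \<longrightarrow> \<kappa> v = 0" using k by (simp add: proper_alt)
    have "ec ((\<lambda>e. f ` e) ` E) (g \<kappa>)" using k ec_eq[of "g \<kappa>"] hg[OF k0] by (simp add: proper_alt)
    moreover have "\<forall>v\<in>f ` V. 1 \<le> g \<kappa> v" using k by (auto simp: proper_alt g_def inv_into_into)
    moreover have "\<forall>v. v \<notin> f ` V \<longrightarrow> g \<kappa> v = 0" by (simp add: g_def)
    moreover have "wt (f ` V) (g \<kappa>) = \<alpha>" using k wt_eq[of "g \<kappa>"] hg[OF k0] by simp
    ultimately show ?thesis by (simp add: proper_alt)
  qed
  have "bij_betw h ?A ?B"
  proof (rule bij_betw_byWitness[where f'=g])
    show "\<forall>a\<in>?A. g (h a) = a" using gh by (simp add: proper_alt)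
    show "\<forall>a\<in>?B. h (g a) = a" using hg by (simp add: proper_alt)
    show "h ` ?A \<subseteq> ?B" using hA by blast
    show "g ` ?B \<subseteq> ?A" using gB by blast
  qed
  hence "card ?A = card ?B" by (rule bij_betw_same_card)
  thus "chrom_sym (f ` fst G, (\<lambda>e. f ` e) ` snd G) \<alpha> = chrom_sym G \<alpha>"
    by (simp add: chrom_sym_alt V_def E_def)
qed

definition DU :: "'x graph \<Rightarrow> 'y graph \<Rightarrow> ('x + 'y) graph" where
  "DU G1 G2 = (Inl ` fst G1 \<union> Inr ` fst G2, (\<lambda>e. Inl ` e) ` snd G1 \<union> (\<lambda>e. Inr ` e) ` snd G2)"

lemma proper_DU: "\<kappa> \<in> proper_colorings (DU G1 G2) \<longleftrightarrow>
   (\<kappa> \<circ> Inl) \<in> proper_colorings G1 \<and> (\<kappa> \<circ> Inr) \<in> proper_colorings G2"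
proof -
  have a: "(\<forall>v\<in>Inl ` fst G1 \<union> Inr ` fst G2. 1 \<le> \<kappa> v) \<longleftrightarrow>
        (\<forall>v\<in>fst G1. 1 \<le> (\<kappa> \<circ> Inl) v) \<and> (\<forall>v\<in>fst G2. 1 \<le> (\<kappa> \<circ> Inr) v)" by auto
  have b: "(\<forall>v. v \<notin> Inl ` fst G1 \<union> Inr ` fst G2 \<longrightarrow> \<kappa> v = 0) \<longleftrightarrow>
        (\<forall>v. v \<notin> fst G1 \<longrightarrow> (\<kappa> \<circ> Inl) v = 0) \<and> (\<forall>v. v \<notin> fst G2 \<longrightarrow> (\<kappa> \<circ> Inr) v = 0)"
  proof
    assume H: "\<forall>v. v \<notin> Inl ` fst G1 \<union> Inr ` fst G2 \<longrightarrow> \<kappa> v = 0"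
    show "(\<forall>v. v \<notin> fst G1 \<longrightarrow> (\<kappa> \<circ> Inl) v = 0) \<and> (\<forall>v. v \<notin> fst G2 \<longrightarrow> (\<kappa> \<circ> Inr) v = 0)"
      using H by auto
  next
    assume H: "(\<forall>v. v \<notin> fst G1 \<longrightarrow> (\<kappa> \<circ> Inl) v = 0) \<and> (\<forall>v. v \<notin> fst G2 \<longrightarrow> (\<kappa> \<circ> Inr) v = 0)"
    show "\<forall>v. v \<notin> Inl ` fst G1 \<union> Inr ` fst G2 \<longrightarrow> \<kappa> v = 0"
    proof (intro allI impI)
      fix v assume "v \<notin> Inl ` fst G1 \<union> Inr ` fst G2"
      thus "\<kappa> v = 0" using H by (cases v) auto
    qed
  qed
  show ?thesis unfolding proper_alt DU_def fst_conv snd_conv ec_Un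
    ec_image_inj[OF inj_Inl] ec_image_inj[OF inj_Inr] a b by blast
qed

lemma wt_DU:
  assumes "finite V1" "finite V2"
  shows "wt (Inl ` V1 \<union> Inr ` V2) \<kappa> c = wt V1 (\<kappa> \<circ> Inl) c + wt V2 (\<kappa> \<circ> Inr) c"
proof -
  have "{x \<in> Inl ` V1 \<union> Inr ` V2. \<kappa> x = c} =
        Inl ` {a \<in> V1. (\<kappa> \<circ> Inl) a = c} \<union> Inr ` {b \<in> V2. (\<kappa> \<circ> Inr) b = c}" by auto
  moreover have "card (Inl ` {a \<in> V1. (\<kappa> \<circ> Inl) a = c} \<union> Inr ` {b \<in> V2. (\<kappa> \<circ> Inr) b = c})
      = card {a \<in> V1. (\<kappa> \<circ> Inl) a = c} + card {b \<in> V2. (\<kappa> \<circ> Inr) b = c}"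
    using assms by (subst card_Un_disjoint) (auto simp: card_image)
  ultimately show ?thesis unfolding wt_def by simp
qed

lemma chrom_DU:
  assumes f1: "finite (fst G1)" and f2: "finite (fst G2)"
  shows "sf_mult (chrom_sym G1) (chrom_sym G2) = chrom_sym (DU G1 G2)"
proof
  fix \<alpha>
  define V1 where "V1 = fst G1"
  define V2 where "V2 = fst G2"
  have fV1: "finite V1" and fV2: "finite V2" using f1 f2 by (simp_all add: V1_def V2_def)
  define VD where "VD = Inl ` V1 \<union> Inr ` V2"
  have VD: "fst (DU G1 G2) = VD" by (simp add: DU_def VD_def V1_def V2_def)
  have fVD: "finite VD" using fV1 fV2 by (simp add: VD_def)
  define X1 where "X1 \<beta> = {\<kappa> \<in> proper_colorings G1. wt V1 \<kappa> = \<beta>}" for \<beta>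
  define X2 where "X2 \<beta> = {\<kappa> \<in> proper_colorings G2. wt V2 \<kappa> = \<beta>}" for \<beta>
  define Y where "Y = {\<kappa> \<in> proper_colorings (DU G1 G2). wt VD \<kappa> = \<alpha>}"
  define B where "B = {\<beta>::nat\<Rightarrow>nat. \<forall>c. \<beta> c \<le> \<alpha> c}"
  have wtD: "wt VD \<kappa> = (\<lambda>c. wt V1 (\<kappa> \<circ> Inl) c + wt V2 (\<kappa> \<circ> Inr) c)" for \<kappa>
    using wt_DU[OF fV1 fV2] by (auto simp: VD_def)
  have cs1: "(case_sum k1 k2) \<circ> Inl = k1" "(case_sum k1 k2) \<circ> Inr = k2" for k1 k2 :: "_ \<Rightarrow> nat"
    by (auto simp: fun_eq_iff)
  have LHS: "sf_mult (chrom_sym G1) (chrom_sym G2) \<alpha> = (\<Sum>\<beta>\<in>B. int (card (X1 \<beta>)) * int (card (X2 (\<lambda>c. \<alpha> c - \<beta> c))))"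
    unfolding sf_mult_def B_def X1_def X2_def chrom_sym_alt V1_def V2_def by simp
  have RHS: "chrom_sym (DU G1 G2) \<alpha> = int (card Y)"
    unfolding chrom_sym_alt Y_def VD by simp
  show "sf_mult (chrom_sym G1) (chrom_sym G2) \<alpha> = chrom_sym (DU G1 G2) \<alpha>"
  proof (cases "Y = {}")
    case True
    have "int (card (X1 \<beta>)) * int (card (X2 (\<lambda>c. \<alpha> c - \<beta> c))) = 0" if "\<beta> \<in> B" for \<beta>
    proof (rule ccontr)
      assume "int (card (X1 \<beta>)) * int (card (X2 (\<lambda>c. \<alpha> c - \<beta> c))) \<noteq> 0"
      hence "X1 \<beta> \<noteq> {}" "X2 (\<lambda>c. \<alpha> c - \<beta> c) \<noteq> {}" by auto
      then obtain k1 k2 where k1: "k1 \<in> X1 \<beta>" and k2: "k2 \<in> X2 (\<lambda>c. \<alpha> c - \<beta> c)" by blast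
      have "case_sum k1 k2 \<in> Y"
        using k1 k2 that unfolding Y_def X1_def X2_def B_def
        by (auto simp: proper_DU cs1 wtD fun_eq_iff)
      thus False using True by blast
    qed
    hence "(\<Sum>\<beta>\<in>B. int (card (X1 \<beta>)) * int (card (X2 (\<lambda>c. \<alpha> c - \<beta> c)))) = 0"
      by (intro sum.neutral ballI)
    thus ?thesis using LHS RHS True by simp
  next
    case False
    then obtain \<kappa>0 where k0: "\<kappa>0 \<in> Y" by blast
    have alpha0: "\<alpha> = wt VD \<kappa>0" using k0 by (simp add: Y_def)
    define S where "S = \<kappa>0 ` VD"
    have fS: "finite S" using fVD by (simp add: S_def)
    have "B \<subseteq> {f. \<forall>x. (x \<in> S \<longrightarrow> f x \<in> {0..card VD}) \<and> (x \<notin> S \<longrightarrow> f x = 0)}"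
    proof clarify
      fix \<beta> x assume b: "\<beta> \<in> B"
      have le: "\<beta> x \<le> \<alpha> x" using b by (simp add: B_def)
      have "\<alpha> x \<le> card VD" unfolding alpha0 wt_def by (rule card_mono[OF fVD]) auto
      moreover have "\<alpha> x = 0" if "x \<notin> S"
      proof -
        have "{v \<in> VD. \<kappa>0 v = x} = {}" using that unfolding S_def by auto
        thus ?thesis unfolding alpha0 wt_def by (metis card.empty)
      qed
      ultimately show "(x \<in> S \<longrightarrow> \<beta> x \<in> {0..card VD}) \<and> (x \<notin> S \<longrightarrow> \<beta> x = 0)" using le by auto
    qed
    hence fB: "finite B" by (rule finite_subset) (rule finite_set_of_finite_funs[OF fS], simp)
    define Yb where "Yb \<beta> = {\<kappa> \<in> Y. wt V1 (\<kappa> \<circ> Inl) = \<beta>}" for \<beta>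
    have fY: "finite Y"
      by (rule finite_subset[OF _ finite_wt_set[OF fVD, of \<alpha>]]) (auto simp: Y_def proper_alt VD)
    have Yun: "Y = (\<Union>\<beta>\<in>B. Yb \<beta>)"
      unfolding Yb_def B_def Y_def by (auto simp: wtD)
    have cardY: "card Y = (\<Sum>\<beta>\<in>B. card (Yb \<beta>))"
      unfolding Yun by (rule card_UN_disjoint[OF fB]) (use fY in \<open>auto simp: Yb_def\<close>)
    have cardYb: "card (Yb \<beta>) = card (X1 \<beta>) * card (X2 (\<lambda>c. \<alpha> c - \<beta> c))" if b: "\<beta> \<in> B" for \<beta>
    proof -
      have "bij_betw (\<lambda>\<kappa>. (\<kappa> \<circ> Inl, \<kappa> \<circ> Inr)) (Yb \<beta>) (X1 \<beta> \<times> X2 (\<lambda>c. \<alpha> c - \<beta> c))"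
      proof (rule bij_betw_byWitness[where f'="\<lambda>(k1, k2). case_sum k1 k2"])
        show "\<forall>a\<in>Yb \<beta>. (case (a \<circ> Inl, a \<circ> Inr) of (k1, k2) \<Rightarrow> case_sum k1 k2) = a"
          by (auto simp: fun_eq_iff split: sum.split)
        show "\<forall>a'\<in>X1 \<beta> \<times> X2 (\<lambda>c. \<alpha> c - \<beta> c). (\<lambda>\<kappa>. (\<kappa> \<circ> Inl, \<kappa> \<circ> Inr)) (case a' of (k1, k2) \<Rightarrow> case_sum k1 k2) = a'"
          by (auto simp: cs1)
        show "(\<lambda>\<kappa>. (\<kappa> \<circ> Inl, \<kappa> \<circ> Inr)) ` Yb \<beta> \<subseteq> X1 \<beta> \<times> X2 (\<lambda>c. \<alpha> c - \<beta> c)"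
          unfolding Yb_def Y_def X1_def X2_def by (auto simp: proper_DU wtD)
        show "(\<lambda>(k1, k2). case_sum k1 k2) ` (X1 \<beta> \<times> X2 (\<lambda>c. \<alpha> c - \<beta> c)) \<subseteq> Yb \<beta>"
          using b unfolding Yb_def Y_def X1_def X2_def B_def
          by (auto simp: proper_DU cs1 wtD fun_eq_iff)
      qed
      hence "card (Yb \<beta>) = card (X1 \<beta> \<times> X2 (\<lambda>c. \<alpha> c - \<beta> c))" by (rule bij_betw_same_card)
      thus ?thesis by (simp add: card_cartesian_product)
    qed
    show ?thesis unfolding LHS RHS cardY of_nat_sum
      by (rule sum.cong) (simp_all add: cardYb)
  qed
qed

definition pt :: "'v \<Rightarrow> nat \<Rightarrow> 'v + nat" where
  "pt v i = (if i = 0 then Inl v else Inr i)"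

definition extG :: "'v graph \<Rightarrow> nat \<Rightarrow> ('v + nat) set set \<Rightarrow> ('v + nat) graph" where
  "extG A n Es = (Inl ` fst A \<union> Inr ` {1..n}, (\<lambda>e. Inl ` e) ` snd A \<union> Es)"

definition pE :: "'v \<Rightarrow> nat \<Rightarrow> nat \<Rightarrow> ('v + nat) set set" where
  "pE v a b = (\<lambda>i. {pt v i, pt v (Suc i)}) ` {a..<b}"

definition Pg :: "'v graph \<Rightarrow> 'v \<Rightarrow> nat \<Rightarrow> ('v + nat) graph" where
  "Pg A v n = extG A n (pE v 0 n)"

definition Zg :: "'v graph \<Rightarrow> 'v \<Rightarrow> nat \<Rightarrow> ('v + nat) graph" where
  "Zg A v n = extG A n (pE v 0 n \<union> {{pt v n, pt v 0}})"

definition Tg :: "'v graph \<Rightarrow> 'v \<Rightarrow> nat \<Rightarrow> nat \<Rightarrow> ('v + nat) graph" where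
  "Tg A v n l = extG A n (pE v 0 (l - 1) \<union> pE v l n \<union> {{pt v n, pt v l}})"

definition base :: "'v graph \<Rightarrow> nat \<Rightarrow> ('v + nat \<Rightarrow> nat) \<Rightarrow> bool" where
  "base A n \<kappa> \<longleftrightarrow> (\<forall>x\<in>Inl ` fst A \<union> Inr ` {1..n}. 1 \<le> \<kappa> x) \<and>
     (\<forall>x. x \<notin> Inl ` fst A \<union> Inr ` {1..n} \<longrightarrow> \<kappa> x = 0) \<and> ec (snd A) (\<kappa> \<circ> Inl)"

lemma pt_neq_Suc[simp]: "pt v i \<noteq> pt v (Suc i)"
  by (simp add: pt_def)

lemma pt_eq_iff: "pt v i = pt v j \<longleftrightarrow> i = j"
  by (simp add: pt_def)

lemma proper_extG: "\<kappa> \<in> proper_colorings (extG A n Es) \<longleftrightarrow> base A n \<kappa> \<and> ec Es \<kappa>"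
  unfolding proper_alt extG_def base_def fst_conv snd_conv ec_Un ec_image_inj[OF inj_Inl] by blast

lemma ec_pE: "ec (pE v a b) \<kappa> \<longleftrightarrow> (\<forall>i\<in>{a..<b}. \<kappa> (pt v i) \<noteq> \<kappa> (pt v (Suc i)))"
  unfolding pE_def ec_pairs by simp

lemma card_split:
  assumes "finite S"
  shows "card {x \<in> S. P x} = card {x \<in> S. P x \<and> Q x} + card {x \<in> S. P x \<and> \<not> Q x}"
proof -
  have "{x \<in> S. P x} = {x \<in> S. P x \<and> Q x} \<union> {x \<in> S. P x \<and> \<not> Q x}" by blast
  hence "card {x \<in> S. P x} = card ({x \<in> S. P x \<and> Q x} \<union> {x \<in> S. P x \<and> \<not> Q x})" by simp
  also have "\<dots> = card {x \<in> S. P x \<and> Q x} + card {x \<in> S. P x \<and> \<not> Q x}"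
    by (rule card_Un_disjoint) (use assms in auto)
  finally show ?thesis .
qed

lemma card_cong_pred:
  assumes "\<And>x. x \<in> S \<Longrightarrow> P x \<longleftrightarrow> Q x"
  shows "card {x \<in> S. P x} = card {x \<in> S. Q x}"
  using assms by (metis (mono_tags, lifting) Collect_cong)

lemma rot_seq:
  fixes s :: "nat \<Rightarrow> nat"
  assumes l: "1 \<le> l" "l < n"
    and h1: "\<forall>i<l-1. s i \<noteq> s (Suc i)" and h2: "\<forall>i. l \<le> i \<and> i < n \<longrightarrow> s i \<noteq> s (Suc i)"
    and h3: "s n \<noteq> s l" and h4: "s (l-1) = s l"
  defines "r \<equiv> \<lambda>i. if l \<le> i \<and> i < n then s (Suc i) else if i = n then s l else s i"
  shows "(\<forall>i<n. r i \<noteq> r (Suc i)) \<and> r n = r (l-1)"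
proof (intro conjI allI impI)
  fix i assume i: "i < n"
  consider "i < l - 1" | "i = l - 1" | "l \<le> i \<and> Suc i < n" | "Suc i = n" using i l by linarith
  thus "r i \<noteq> r (Suc i)"
  proof cases
    case 1
    hence "r i = s i" "r (Suc i) = s (Suc i)" using l by (auto simp: r_def)
    thus ?thesis using h1 1 by simp
  next
    case 2
    have "r i = s l" using 2 h4 l by (simp add: r_def)
    moreover have "r (Suc i) = s (Suc l)" using 2 l by (simp add: r_def)
    moreover have "s l \<noteq> s (Suc l)" using h2 l by simp
    ultimately show ?thesis by simp
  next
    case 3 thus ?thesis using h2 l by (simp add: r_def)
  next
    case 4
    have "r i = s n" using 4 l by (simp add: r_def)
    moreover have "r (Suc i) = s l" using 4 by (simp add: r_def)
    ultimately show ?thesis using h3 by simp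
  qed
next
  show "r n = r (l-1)" using l h4 by (simp add: r_def)
qed

lemma rotinv_seq:
  fixes s :: "nat \<Rightarrow> nat"
  assumes l: "1 \<le> l" "l < n"
    and h1: "\<forall>i<n. s i \<noteq> s (Suc i)" and h2: "s n = s (l-1)"
  defines "r \<equiv> \<lambda>i. if l < i \<and> i \<le> n then s (i - 1) else if i = l then s n else s i"
  shows "(\<forall>i<l-1. r i \<noteq> r (Suc i)) \<and> (\<forall>i. l \<le> i \<and> i < n \<longrightarrow> r i \<noteq> r (Suc i))
     \<and> r n \<noteq> r l \<and> r (l-1) = r l"
proof (intro conjI allI impI)
  fix i assume i: "i < l - 1"
  hence "r i = s i" "r (Suc i) = s (Suc i)" using l by (auto simp: r_def)
  thus "r i \<noteq> r (Suc i)" using h1 i l by simp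
next
  fix i assume i: "l \<le> i \<and> i < n"
  show "r i \<noteq> r (Suc i)"
  proof (cases "i = l")
    case True
    have "r i = s (l-1)" using True h2 l by (simp add: r_def)
    moreover have "r (Suc i) = s l" using True l by (simp add: r_def)
    moreover have "s (l-1) \<noteq> s (Suc (l-1))" using h1 l by (metis Suc_le_lessD diff_le_self le_less_trans less_imp_diff_less)
    moreover have "Suc (l-1) = l" using l by simp
    ultimately show ?thesis by simp
  next
    case False
    hence "r i = s (i-1)" "r (Suc i) = s i" using i by (simp_all add: r_def)
    moreover have "s (i-1) \<noteq> s (Suc (i-1))"
    proof -
      have "i - 1 < n" using i by linarith
      thus ?thesis using h1 by blast
    qed
    moreover have "Suc (i-1) = i" using i False l by simp
    ultimately show ?thesis by simp
  qed
next
  have "r n = s (n-1)" using l by (simp add: r_def)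
  moreover have "r l = s n" using l by (simp add: r_def)
  moreover have "s (n-1) \<noteq> s (Suc (n-1))"
  proof -
    have "n - 1 < n" using l by linarith
    thus ?thesis using h1 by blast
  qed
  moreover have "Suc (n-1) = n" using l by linarith
  ultimately show "r n \<noteq> r l" by simp
next
  have "\<not> (l < l - 1)" "l - 1 \<noteq> l" using l by linarith+
  hence "r (l-1) = s (l-1)" by (simp add: r_def)
  moreover have "r l = s n" using l by (simp add: r_def)
  ultimately show "r (l-1) = r l" using h2 by simp
qed

definition rot :: "nat \<Rightarrow> nat \<Rightarrow> 'v + nat \<Rightarrow> 'v + nat" where
  "rot l n x = (case x of Inl a \<Rightarrow> Inl a | Inr i \<Rightarrow>
      if l \<le> i \<and> i < n then Inr (Suc i) else if i = n then Inr l else Inr i)"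

definition rotinv :: "nat \<Rightarrow> nat \<Rightarrow> 'v + nat \<Rightarrow> 'v + nat" where
  "rotinv l n x = (case x of Inl a \<Rightarrow> Inl a | Inr i \<Rightarrow>
      if l < i \<and> i \<le> n then Inr (i - 1) else if i = l then Inr n else Inr i)"

lemma rot_rotinv: "1 \<le> l \<Longrightarrow> l < n \<Longrightarrow> rot l n (rotinv l n x) = x"
  by (cases x) (auto simp: rot_def rotinv_def)

lemma rotinv_rot: "1 \<le> l \<Longrightarrow> l < n \<Longrightarrow> rotinv l n (rot l n x) = x"
  by (cases x) (auto simp: rot_def rotinv_def)

lemma rot_W: "1 \<le> l \<Longrightarrow> l < n \<Longrightarrow>
   rot l n x \<in> Inl ` V \<union> Inr ` {1..n} \<longleftrightarrow> x \<in> Inl ` V \<union> Inr ` {1..n}"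
  by (cases x) (auto simp: rot_def)

lemma rotinv_W: "1 \<le> l \<Longrightarrow> l < n \<Longrightarrow>
   rotinv l n x \<in> Inl ` V \<union> Inr ` {1..n} \<longleftrightarrow> x \<in> Inl ` V \<union> Inr ` {1..n}"
  by (cases x) (auto simp: rotinv_def image_iff)

lemma rot_pt: "1 \<le> l \<Longrightarrow> l < n \<Longrightarrow>
  rot l n (pt v i) = (if l \<le> i \<and> i < n then pt v (Suc i) else if i = n then pt v l else pt v i)"
  by (auto simp: rot_def pt_def)

lemma rotinv_pt: "1 \<le> l \<Longrightarrow> l < n \<Longrightarrow>
  rotinv l n (pt v i) = (if l < i \<and> i \<le> n then pt v (i - 1) else if i = l then pt v n else pt v i)"
  by (auto simp: rotinv_def pt_def)

lemma rot_Inl[simp]: "rot l n (Inl a) = Inl a" "rotinv l n (Inl a) = Inl a"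
  by (simp_all add: rot_def rotinv_def)

lemma wt_perm:
  assumes a1: "\<And>x. \<sigma> (\<sigma>' x) = x" and a2: "\<And>x. \<sigma>' (\<sigma> x) = x" and a3: "\<And>x. \<sigma> x \<in> W \<longleftrightarrow> x \<in> W"
  shows "wt W (\<kappa> \<circ> \<sigma>) = wt W \<kappa>"
proof
  fix c
  have eq: "\<sigma> ` {x \<in> W. \<kappa> (\<sigma> x) = c} = {y \<in> W. \<kappa> y = c}"
  proof
    show "\<sigma> ` {x \<in> W. \<kappa> (\<sigma> x) = c} \<subseteq> {y \<in> W. \<kappa> y = c}" using a3 by auto
    show "{y \<in> W. \<kappa> y = c} \<subseteq> \<sigma> ` {x \<in> W. \<kappa> (\<sigma> x) = c}"
    proof
      fix y assume y: "y \<in> {y \<in> W. \<kappa> y = c}"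
      have "\<sigma> (\<sigma>' y) \<in> W" using y a1[of y] by simp
      hence "\<sigma>' y \<in> W" using a3 by blast
      moreover have "\<kappa> (\<sigma> (\<sigma>' y)) = c" using y a1[of y] by simp
      ultimately have "\<sigma>' y \<in> {x \<in> W. \<kappa> (\<sigma> x) = c}" by simp
      hence "\<sigma> (\<sigma>' y) \<in> \<sigma> ` {x \<in> W. \<kappa> (\<sigma> x) = c}" by (rule imageI)
      thus "y \<in> \<sigma> ` {x \<in> W. \<kappa> (\<sigma> x) = c}" using a1[of y] by simp
    qed
  qed
  have inj: "inj_on \<sigma> {x \<in> W. \<kappa> (\<sigma> x) = c}"
  proof (rule inj_onI)
    fix x y assume "\<sigma> x = \<sigma> y"
    hence "\<sigma>' (\<sigma> x) = \<sigma>' (\<sigma> y)" by simp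
    thus "x = y" using a2 by simp
  qed
  have "card {x \<in> W. \<kappa> (\<sigma> x) = c} = card {y \<in> W. \<kappa> y = c}"
    using card_image[OF inj] eq by simp
  thus "wt W (\<kappa> \<circ> \<sigma>) c = wt W \<kappa> c" unfolding wt_def by simp
qed

lemma core:
  fixes A :: "'v graph" and v :: 'v
  assumes fA: "finite (fst A)" and n: "1 \<le> n"
  shows "chrom_sym (Zg A v n) \<alpha> =
     int n * chrom_sym (Pg A v n) \<alpha> - (\<Sum>l = 1..n-1. chrom_sym (Tg A v n l) \<alpha>)"
proof -
  define W where "W = Inl ` fst A \<union> Inr ` {1..n}"
  have fW: "finite W" using fA by (simp add: W_def)
  define Bs where "Bs = {\<kappa>. base A n \<kappa> \<and> wt W \<kappa> = \<alpha>}"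
  have fB: "finite Bs"
    by (rule finite_subset[OF _ finite_wt_set[OF fW, of \<alpha>]]) (auto simp: Bs_def base_def W_def)
  have chromE: "chrom_sym (extG A n Es) \<alpha> = int (card {\<kappa> \<in> Bs. ec Es \<kappa>})" for Es
  proof -
    have fst_extG: "fst (extG A n Es) = W" by (simp add: extG_def W_def)
    have "{\<kappa> \<in> proper_colorings (extG A n Es). wt (fst (extG A n Es)) \<kappa> = \<alpha>} = {\<kappa> \<in> Bs. ec Es \<kappa>}"
      using fst_extG by (auto simp: proper_extG Bs_def)
    thus ?thesis by (simp add: chrom_sym_alt)
  qed
  define q where "q \<kappa> i \<longleftrightarrow> \<kappa> (pt v i) \<noteq> \<kappa> (pt v (Suc i))" for \<kappa> :: "'v + nat \<Rightarrow> nat" and i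
  define PP where "PP \<kappa> \<longleftrightarrow> (\<forall>i<n. q \<kappa> i)" for \<kappa>
  define E where "E j \<kappa> \<longleftrightarrow> PP \<kappa> \<and> \<kappa> (pt v n) = \<kappa> (pt v j)" for j \<kappa>
  define TT where "TT l \<kappa> \<longleftrightarrow> (\<forall>i<l-1. q \<kappa> i) \<and> (\<forall>i. l \<le> i \<and> i < n \<longrightarrow> q \<kappa> i)
      \<and> \<kappa> (pt v n) \<noteq> \<kappa> (pt v l)" for l \<kappa>
  define p where "p = card {\<kappa> \<in> Bs. PP \<kappa>}"
  define e where "e j = card {\<kappa> \<in> Bs. E j \<kappa>}" for j
  define t where "t l = card {\<kappa> \<in> Bs. TT l \<kappa>}" for l
  have cP: "chrom_sym (Pg A v n) \<alpha> = int p"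
    unfolding Pg_def chromE p_def ec_pE PP_def q_def by (simp add: atLeast0LessThan Ball_def lessThan_iff)
  have cZ: "chrom_sym (Zg A v n) \<alpha> = int (card {\<kappa> \<in> Bs. PP \<kappa> \<and> \<kappa> (pt v n) \<noteq> \<kappa> (pt v 0)})"
    unfolding Zg_def chromE ec_Un ec_pE ec_single PP_def q_def using n by (simp add: pt_eq_iff atLeast0LessThan Ball_def lessThan_iff)
  have cT: "chrom_sym (Tg A v n l) \<alpha> = int (t l)" if l: "1 \<le> l" "l < n" for l
    unfolding Tg_def chromE ec_Un ec_pE ec_single t_def TT_def q_def using l
    by (simp add: pt_eq_iff atLeast0LessThan Ball_def lessThan_iff atLeastLessThan_iff conj_ac)
  have a: "p = card {\<kappa> \<in> Bs. PP \<kappa> \<and> \<kappa> (pt v n) \<noteq> \<kappa> (pt v 0)} + e 0"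
    unfolding p_def e_def E_def by (subst card_split[OF fB, where Q="\<lambda>\<kappa>. \<kappa> (pt v n) \<noteq> \<kappa> (pt v 0)"]) simp
  have c: "p = card {\<kappa> \<in> Bs. PP \<kappa> \<and> \<kappa> (pt v n) \<noteq> \<kappa> (pt v l)} + e l" for l
    unfolding p_def e_def E_def by (subst card_split[OF fB, where Q="\<lambda>\<kappa>. \<kappa> (pt v n) \<noteq> \<kappa> (pt v l)"]) simp
  have b: "t l = card {\<kappa> \<in> Bs. PP \<kappa> \<and> \<kappa> (pt v n) \<noteq> \<kappa> (pt v l)}
              + card {\<kappa> \<in> Bs. TT l \<kappa> \<and> \<kappa> (pt v (l-1)) = \<kappa> (pt v l)}" if l: "1 \<le> l" "l < n" for l
  proof -
    have "t l = card {\<kappa> \<in> Bs. TT l \<kappa> \<and> \<kappa> (pt v (l-1)) \<noteq> \<kappa> (pt v l)}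
              + card {\<kappa> \<in> Bs. TT l \<kappa> \<and> \<not> \<kappa> (pt v (l-1)) \<noteq> \<kappa> (pt v l)}"
      unfolding t_def by (rule card_split[OF fB])
    moreover have "card {\<kappa> \<in> Bs. TT l \<kappa> \<and> \<kappa> (pt v (l-1)) \<noteq> \<kappa> (pt v l)}
        = card {\<kappa> \<in> Bs. PP \<kappa> \<and> \<kappa> (pt v n) \<noteq> \<kappa> (pt v l)}"
    proof (rule card_cong_pred)
      fix \<kappa>
      have sl: "Suc (l-1) = l" using l by simp
      show "(TT l \<kappa> \<and> \<kappa> (pt v (l-1)) \<noteq> \<kappa> (pt v l)) \<longleftrightarrow> (PP \<kappa> \<and> \<kappa> (pt v n) \<noteq> \<kappa> (pt v l))"
      proof
        assume H: "TT l \<kappa> \<and> \<kappa> (pt v (l-1)) \<noteq> \<kappa> (pt v l)"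
        have "q \<kappa> i" if i: "i < n" for i
        proof -
          consider "i < l - 1" | "i = l - 1" | "l \<le> i" by linarith
          thus ?thesis
          proof cases
            case 1 thus ?thesis using H by (simp add: TT_def)
          next
            case 2 thus ?thesis using H sl by (simp add: q_def)
          next
            case 3 thus ?thesis using H i by (simp add: TT_def)
          qed
        qed
        thus "PP \<kappa> \<and> \<kappa> (pt v n) \<noteq> \<kappa> (pt v l)" using H by (simp add: PP_def TT_def)
      next
        assume H: "PP \<kappa> \<and> \<kappa> (pt v n) \<noteq> \<kappa> (pt v l)"
        have "q \<kappa> (l-1)" using H l unfolding PP_def by simp
        hence "\<kappa> (pt v (l-1)) \<noteq> \<kappa> (pt v l)" using sl by (simp add: q_def)
        moreover have "TT l \<kappa>" using H l unfolding TT_def PP_def by simp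
        ultimately show "TT l \<kappa> \<and> \<kappa> (pt v (l-1)) \<noteq> \<kappa> (pt v l)" by simp
      qed
    qed
    ultimately show ?thesis by simp
  qed
  have rotk: "(\<kappa> \<circ> rot l n) (pt v i) = (if l \<le> i \<and> i < n then \<kappa> (pt v (Suc i)) else if i = n then \<kappa> (pt v l) else \<kappa> (pt v i))"
    if l: "1 \<le> l" "l < n" for l \<kappa> i
    using rot_pt[OF l, of v i] by simp
  have rotinvk: "(\<kappa> \<circ> rotinv l n) (pt v i) = (if l < i \<and> i \<le> n then \<kappa> (pt v (i - 1)) else if i = l then \<kappa> (pt v n) else \<kappa> (pt v i))"
    if l: "1 \<le> l" "l < n" for l \<kappa> i
    using rotinv_pt[OF l, of v i] by simp
  have Bs_perm: "\<kappa> \<circ> \<sigma> \<in> Bs" if k: "\<kappa> \<in> Bs" and s1: "\<And>x. \<sigma> (\<sigma>' x) = x" and s2: "\<And>x. \<sigma>' (\<sigma> x) = x"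
     and s3: "\<And>x. \<sigma> x \<in> W \<longleftrightarrow> x \<in> W" and s4: "\<And>a. \<sigma> (Inl a) = Inl a" for \<kappa> \<sigma> \<sigma>'
  proof -
    have "\<kappa> \<circ> \<sigma> \<circ> Inl = \<kappa> \<circ> Inl" using s4 by (simp add: fun_eq_iff)
    hence "base A n (\<kappa> \<circ> \<sigma>)" using k s3 unfolding Bs_def base_def W_def[symmetric] by simp
    moreover have "wt W (\<kappa> \<circ> \<sigma>) = \<alpha>" using wt_perm[of \<sigma> \<sigma>' W \<kappa>, OF s1 s2 s3] k by (simp add: Bs_def)
    ultimately show ?thesis by (simp add: Bs_def)
  qed
  have d: "card {\<kappa> \<in> Bs. TT l \<kappa> \<and> \<kappa> (pt v (l-1)) = \<kappa> (pt v l)} = e (l-1)" if l: "1 \<le> l" "l < n" for l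
  proof -
    have r1: "\<And>x. rot l n (rotinv l n x) = x" by (rule rot_rotinv[OF l])
    have r2: "\<And>x. rotinv l n (rot l n x) = x" by (rule rotinv_rot[OF l])
    have r3: "\<And>x. rot l n x \<in> W \<longleftrightarrow> x \<in> W" unfolding W_def by (rule rot_W[OF l])
    have r4: "\<And>x. rotinv l n x \<in> W \<longleftrightarrow> x \<in> W" unfolding W_def by (rule rotinv_W[OF l])
    have "bij_betw (\<lambda>\<kappa>. \<kappa> \<circ> rot l n) {\<kappa> \<in> Bs. TT l \<kappa> \<and> \<kappa> (pt v (l-1)) = \<kappa> (pt v l)} {\<kappa> \<in> Bs. E (l-1) \<kappa>}"
    proof (rule bij_betw_byWitness[where f'="\<lambda>\<kappa>. \<kappa> \<circ> rotinv l n"])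
      show "\<forall>a\<in>{\<kappa> \<in> Bs. TT l \<kappa> \<and> \<kappa> (pt v (l-1)) = \<kappa> (pt v l)}. a \<circ> rot l n \<circ> rotinv l n = a"
        by (simp add: fun_eq_iff r1)
      show "\<forall>a\<in>{\<kappa> \<in> Bs. E (l-1) \<kappa>}. a \<circ> rotinv l n \<circ> rot l n = a"
        by (simp add: fun_eq_iff r2)
      show "(\<lambda>\<kappa>. \<kappa> \<circ> rot l n) ` {\<kappa> \<in> Bs. TT l \<kappa> \<and> \<kappa> (pt v (l-1)) = \<kappa> (pt v l)} \<subseteq> {\<kappa> \<in> Bs. E (l-1) \<kappa>}"
      proof (rule image_subsetI)
        fix \<kappa> assume "\<kappa> \<in> {\<kappa> \<in> Bs. TT l \<kappa> \<and> \<kappa> (pt v (l-1)) = \<kappa> (pt v l)}"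
        hence k: "\<kappa> \<in> Bs" "TT l \<kappa>" "\<kappa> (pt v (l-1)) = \<kappa> (pt v l)" by auto
        have "\<kappa> \<circ> rot l n \<in> Bs" by (rule Bs_perm[OF k(1) r1 r2 r3]) simp
        moreover have "E (l-1) (\<kappa> \<circ> rot l n)"
        proof -
          have "(\<forall>i<n. (\<lambda>i. if l \<le> i \<and> i < n then \<kappa> (pt v (Suc i)) else if i = n then \<kappa> (pt v l) else \<kappa> (pt v i)) i
                  \<noteq> (\<lambda>i. if l \<le> i \<and> i < n then \<kappa> (pt v (Suc i)) else if i = n then \<kappa> (pt v l) else \<kappa> (pt v i)) (Suc i))
                \<and> (\<lambda>i. if l \<le> i \<and> i < n then \<kappa> (pt v (Suc i)) else if i = n then \<kappa> (pt v l) else \<kappa> (pt v i)) n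
                  = (\<lambda>i. if l \<le> i \<and> i < n then \<kappa> (pt v (Suc i)) else if i = n then \<kappa> (pt v l) else \<kappa> (pt v i)) (l-1)"
            by (rule rot_seq[OF l, of "\<lambda>i. \<kappa> (pt v i)"]) (use k in \<open>simp_all add: TT_def q_def\<close>)
          thus ?thesis unfolding E_def PP_def q_def rotk[OF l] by blast
        qed
        ultimately show "\<kappa> \<circ> rot l n \<in> {\<kappa> \<in> Bs. E (l-1) \<kappa>}" by simp
      qed
      show "(\<lambda>\<kappa>. \<kappa> \<circ> rotinv l n) ` {\<kappa> \<in> Bs. E (l-1) \<kappa>} \<subseteq> {\<kappa> \<in> Bs. TT l \<kappa> \<and> \<kappa> (pt v (l-1)) = \<kappa> (pt v l)}"
      proof (rule image_subsetI)
        fix \<kappa> assume "\<kappa> \<in> {\<kappa> \<in> Bs. E (l-1) \<kappa>}"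
        hence k: "\<kappa> \<in> Bs" "E (l-1) \<kappa>" by auto
        have "\<kappa> \<circ> rotinv l n \<in> Bs" by (rule Bs_perm[OF k(1) r2 r1 r4]) simp
        moreover have "TT l (\<kappa> \<circ> rotinv l n) \<and> (\<kappa> \<circ> rotinv l n) (pt v (l-1)) = (\<kappa> \<circ> rotinv l n) (pt v l)"
        proof -
          let ?r = "\<lambda>i. if l < i \<and> i \<le> n then \<kappa> (pt v (i - 1)) else if i = l then \<kappa> (pt v n) else \<kappa> (pt v i)"
          have "(\<forall>i<l-1. ?r i \<noteq> ?r (Suc i)) \<and> (\<forall>i. l \<le> i \<and> i < n \<longrightarrow> ?r i \<noteq> ?r (Suc i))
              \<and> ?r n \<noteq> ?r l \<and> ?r (l-1) = ?r l"
            by (rule rotinv_seq[OF l, of "\<lambda>i. \<kappa> (pt v i)"]) (use k in \<open>simp_all add: E_def PP_def q_def\<close>)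
          thus ?thesis unfolding TT_def q_def rotinvk[OF l] by blast
        qed
        ultimately show "\<kappa> \<circ> rotinv l n \<in> {\<kappa> \<in> Bs. TT l \<kappa> \<and> \<kappa> (pt v (l-1)) = \<kappa> (pt v l)}" by simp
      qed
    qed
    thus ?thesis unfolding e_def by (rule bij_betw_same_card)
  qed
  have e0: "e (n-1) = 0"
  proof -
    have Eemp: "{\<kappa> \<in> Bs. E (n-1) \<kappa>} = {}"
    proof (rule ccontr)
      assume "{\<kappa> \<in> Bs. E (n-1) \<kappa>} \<noteq> {}"
      then obtain \<kappa> where k: "E (n-1) \<kappa>" by blast
      have "n - 1 < n" using n by linarith
      hence "q \<kappa> (n-1)" using k by (simp add: E_def PP_def)
      moreover have "Suc (n-1) = n" using n by linarith
      ultimately show False using k by (simp add: q_def E_def)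
    qed
    show ?thesis unfolding e_def Eemp by simp
  qed
  have tl: "int (t l) = int p + (int (e (l-1)) - int (e l))" if l: "1 \<le> l" "l < n" for l
    using b[OF l] c[of l] d[OF l] by simp
  have "(\<Sum>l = 1..n-1. chrom_sym (Tg A v n l) \<alpha>) = (\<Sum>l = 1..n-1. int p + (int (e (l-1)) - int (e l)))"
    by (rule sum.cong) (use cT tl in auto)
  also have "\<dots> = (\<Sum>l = 1..n-1. int p) + (\<Sum>l = 1..n-1. int (e (l-1)) - int (e l))"
    by (rule sum.distrib)
  also have "(\<Sum>l = 1..n-1. int (e (l-1)) - int (e l)) = - (\<Sum>l = Suc 0..n-1. int (e l) - int (e (l-1)))"
    by (simp add: sum_negf[symmetric])
  also have "(\<Sum>l = Suc 0..n-1. int (e l) - int (e (l-1))) = int (e (n-1)) - int (e 0)"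
    by (rule sum_telescope''[where f="\<lambda>l. int (e l)"]) simp
  finally have sumT: "(\<Sum>l = 1..n-1. chrom_sym (Tg A v n l) \<alpha>) = int (n-1) * int p + int (e 0)"
    using e0 by simp
  show ?thesis unfolding cZ cP sumT using a n by (simp add: algebra_simps of_nat_diff)
qed

lemma leg_verts_eq: "leg_verts i t = Leg i ` {1..t}"
  unfolding leg_verts_def by auto

lemma leg_edges_eq: "leg_edges i t = (\<lambda>j. {legpos i j, legpos i (Suc j)}) ` {..<t}"
  unfolding leg_edges_def by auto

definition SV :: "nat \<Rightarrow> nat \<Rightarrow> 'a rgraph \<Rightarrow> 'b rgraph \<Rightarrow> ('a, 'b, 'c) spv set" where
  "SV g h G H = {Ctr} \<union> leg_verts 1 g \<union> leg_verts 2 h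
     \<union> sp_emb In1 1 g (snd G) ` fst (fst G) \<union> sp_emb In2 2 h (snd H) ` fst (fst H)"

definition SE :: "nat \<Rightarrow> nat \<Rightarrow> 'a rgraph \<Rightarrow> 'b rgraph \<Rightarrow> ('a, 'b, 'c) spv set set" where
  "SE g h G H = leg_edges 1 g \<union> leg_edges 2 h
     \<union> (\<lambda>e. sp_emb In1 1 g (snd G) ` e) ` snd (fst G) \<union> (\<lambda>e. sp_emb In2 2 h (snd H) ` e) ` snd (fst H)"

lemma legpos_in: "j \<le> t \<Longrightarrow> legpos i j \<in> {Ctr} \<union> leg_verts i t"
  by (auto simp: legpos_def leg_verts_def)

lemma spider2_eq: "spider2 g h t G H = (SV g h G H \<union> leg_verts 3 t, SE g h G H \<union> leg_edges 3 t)"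
proof -
  have "legpos 3 t \<in> {Ctr} \<union> leg_verts 3 t" by (rule legpos_in) simp
  hence "sp_emb In3 3 t () ` {()} \<subseteq> {Ctr} \<union> leg_verts 3 t" by (simp add: sp_emb_def)
  thus ?thesis
    unfolding spider2_def spider_def K1_def Let_def SV_def SE_def fst_conv snd_conv
    by auto
qed

lemma spider_cyc_eq:
  assumes "m \<ge> 2"
  shows "spider g h k G H (cycle_graph m) =
    (SV g h G H \<union> leg_verts 3 k \<union> In3 ` {1..<m},
     SE g h G H \<union> leg_edges 3 k \<union> (\<lambda>i. {sp_emb In3 3 k 0 i, sp_emb In3 3 k 0 (Suc i mod m)}) ` {..<m})"
proof -
  have lp: "legpos 3 k \<in> {Ctr} \<union> leg_verts 3 k" by (rule legpos_in) simp
  have V3: "sp_emb In3 3 k 0 ` {0..<m} = {legpos 3 k} \<union> In3 ` {1..<m}"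
  proof -
    have "{0..<m} = {0} \<union> {1..<m}" using assms by auto
    hence "sp_emb In3 3 k 0 ` {0..<m} = sp_emb In3 3 k 0 ` {0} \<union> sp_emb In3 3 k 0 ` {1..<m}" by simp
    moreover have "sp_emb In3 3 k 0 ` {1..<m} = In3 ` {1..<m}"
      by (rule image_cong) (auto simp: sp_emb_def)
    ultimately show ?thesis by (simp add: sp_emb_def)
  qed
  have E3: "(\<lambda>e. sp_emb In3 3 k 0 ` e) ` {{i, Suc i mod m} |i. i < m}
      = (\<lambda>i. {sp_emb In3 3 k 0 i, sp_emb In3 3 k 0 (Suc i mod m)}) ` {..<m}"
  proof -
    have "{{i, Suc i mod m} |i. i < m} = (\<lambda>i. {i, Suc i mod m}) ` {..<m}" by auto
    thus ?thesis by (simp add: image_image)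
  qed
  have "fst (spider g h k G H (cycle_graph m)) = SV g h G H \<union> leg_verts 3 k \<union> In3 ` {1..<m}"
    unfolding spider_def cycle_graph_def Let_def fst_conv snd_conv V3 SV_def using lp by blast
  moreover have "snd (spider g h k G H (cycle_graph m)) = SE g h G H \<union> leg_edges 3 k
      \<union> (\<lambda>i. {sp_emb In3 3 k 0 i, sp_emb In3 3 k 0 (Suc i mod m)}) ` {..<m}"
    unfolding spider_def cycle_graph_def Let_def fst_conv snd_conv E3 SE_def by blast
  ultimately show ?thesis by (metis prod.collapse)
qed

lemma legpos_neq_Suc[simp]: "legpos i j \<noteq> legpos i (Suc j)"
  by (simp add: legpos_def)

lemma legpos_not_In[simp]: "legpos i t \<noteq> In1 x" "legpos i t \<noteq> In2 y" "legpos i t \<noteq> In3 z"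
   "In1 x \<noteq> legpos i t" "In2 y \<noteq> legpos i t" "In3 z \<noteq> legpos i t"
  by (simp_all add: legpos_def)

lemma inj_sp_emb1: "inj (sp_emb In1 i t r)"
  by (rule injI) (auto simp: sp_emb_def split: if_splits)

lemma inj_sp_emb2: "inj (sp_emb In2 i t r)"
  by (rule injI) (auto simp: sp_emb_def split: if_splits)

lemma Leg3_notin_SV: "Leg 3 j \<notin> SV g h G H"
  by (auto simp: SV_def leg_verts_def sp_emb_def legpos_def)

lemma In3_notin_SV: "In3 c \<notin> SV g h G H"
  by (auto simp: SV_def leg_verts_def sp_emb_def legpos_def)

lemma Ctr_in_SV: "Ctr \<in> SV g h G H"
  by (simp add: SV_def)

lemma finite_SV:
  assumes "rooted_graph G" "rooted_graph H"
  shows "finite (SV g h G H)"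
  using assms unfolding SV_def rooted_graph_def simple_graph_def by (simp add: leg_verts_eq)

lemma leg_edges_ok:
  fixes V :: "('a, 'b, 'c) spv set"
  assumes "{Ctr} \<union> leg_verts i t \<subseteq> V"
  shows "\<forall>e\<in>(leg_edges i t :: ('a, 'b, 'c) spv set set). \<exists>x y. e = {x, y} \<and> x \<noteq> y \<and> x \<in> V \<and> y \<in> V"
proof
  fix e assume "e \<in> (leg_edges i t :: ('a, 'b, 'c) spv set set)"
  then obtain j where j: "j < t" "e = {legpos i j, legpos i (Suc j)}" by (auto simp: leg_edges_eq)
  have "legpos i j \<in> V" "legpos i (Suc j) \<in> V" using legpos_in[of j t i] legpos_in[of "Suc j" t i] j assms by auto
  thus "\<exists>x y. e = {x, y} \<and> x \<noteq> y \<and> x \<in> V \<and> y \<in> V" using j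
    by (intro exI[of _ "legpos i j"] exI[of _ "legpos i (Suc j)"]) simp
qed

lemma img_edges_ok:
  assumes "simple_graph Gr" "inj f" "f ` fst Gr \<subseteq> V"
  shows "\<forall>e\<in>(\<lambda>e. f ` e) ` snd Gr. \<exists>x y. e = {x, y} \<and> x \<noteq> y \<and> x \<in> V \<and> y \<in> V"
proof
  fix e assume "e \<in> (\<lambda>e. f ` e) ` snd Gr"
  then obtain e0 where e0: "e0 \<in> snd Gr" "e = f ` e0" by auto
  have "\<exists>x y. e0 = {x, y} \<and> x \<noteq> y \<and> x \<in> fst Gr \<and> y \<in> fst Gr"
    using assms(1) e0(1) unfolding simple_graph_def by blast
  then obtain x y where xy: "e0 = {x, y}" "x \<noteq> y" "x \<in> fst Gr" "y \<in> fst Gr" by blast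
  have "e = {f x, f y}" using e0 xy by simp
  moreover have "f x \<noteq> f y" using xy assms(2) by (simp add: inj_eq)
  moreover have "f x \<in> V" "f y \<in> V" using xy assms(3) by auto
  ultimately show "\<exists>x y. e = {x, y} \<and> x \<noteq> y \<and> x \<in> V \<and> y \<in> V" by blast
qed

lemma simple_spider2:
  fixes G :: "'a rgraph" and H :: "'b rgraph"
  assumes G: "rooted_graph G" and H: "rooted_graph H"
  shows "simple_graph (spider2 g h t G H)"
proof -
  define V :: "('a, 'b, unit) spv set" where "V = SV g h G H \<union> leg_verts 3 t"
  have sG: "simple_graph (fst G)" and sH: "simple_graph (fst H)" using G H by (simp_all add: rooted_graph_def)
  have fV: "finite V" using finite_SV[OF G H] by (simp add: V_def leg_verts_eq)
  have C: "Ctr \<in> V" by (simp add: V_def Ctr_in_SV)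
  have l1: "{Ctr} \<union> leg_verts 1 g \<subseteq> V" "{Ctr} \<union> leg_verts 2 h \<subseteq> V" "{Ctr} \<union> leg_verts 3 t \<subseteq> V"
    using C unfolding V_def SV_def by blast+
  have i1: "sp_emb In1 1 g (snd G) ` fst (fst G) \<subseteq> V" and i2: "sp_emb In2 2 h (snd H) ` fst (fst H) \<subseteq> V"
    unfolding V_def SV_def by blast+
  have "\<forall>e\<in>SE g h G H \<union> leg_edges 3 t. \<exists>x y. e = {x, y} \<and> x \<noteq> y \<and> x \<in> V \<and> y \<in> V"
    unfolding SE_def ball_Un
    using leg_edges_ok[OF l1(1)] leg_edges_ok[OF l1(2)] leg_edges_ok[OF l1(3)]
      img_edges_ok[OF sG inj_sp_emb1 i1] img_edges_ok[OF sH inj_sp_emb2 i2] by (intro conjI)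
  thus ?thesis unfolding spider2_eq simple_graph_def fst_conv snd_conv V_def[symmetric] using fV by (intro conjI)
qed

lemma finite_spider2:
  assumes "rooted_graph G" "rooted_graph H"
  shows "finite (fst (spider2 g h t G H))"
  using finite_SV[OF assms] by (simp add: spider2_eq leg_verts_eq)

lemma v_in_spider2: "legpos 3 k \<in> fst (spider2 g h k G H)"
  using legpos_in[of k k 3] Ctr_in_SV[of g h G H] by (auto simp: spider2_eq)

lemma simple_extG:
  assumes sA: "simple_graph A" and v: "v \<in> fst A"
    and Es: "\<forall>e\<in>Es. \<exists>i j. e = {pt v i, pt v j} \<and> i \<noteq> j \<and> i \<le> n \<and> j \<le> n"
  shows "simple_graph (extG A n Es)"
proof -
  define W where "W = Inl ` fst A \<union> Inr ` {1..n}"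
  have ptW: "pt v i \<in> W" if "i \<le> n" for i using that v by (auto simp: pt_def W_def)
  have fW: "finite W" using sA by (simp add: W_def simple_graph_def)
  have e1: "\<forall>e\<in>(\<lambda>e. Inl ` e) ` snd A. \<exists>x y. e = {x, y} \<and> x \<noteq> y \<and> x \<in> W \<and> y \<in> W"
    by (rule img_edges_ok[OF sA inj_Inl]) (auto simp: W_def)
  have e2: "\<forall>e\<in>Es. \<exists>x y. e = {x, y} \<and> x \<noteq> y \<and> x \<in> W \<and> y \<in> W"
  proof
    fix e assume "e \<in> Es"
    then obtain i j where "e = {pt v i, pt v j}" "i \<noteq> j" "i \<le> n" "j \<le> n" using Es by blast
    thus "\<exists>x y. e = {x, y} \<and> x \<noteq> y \<and> x \<in> W \<and> y \<in> W" using ptW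
      by (intro exI[of _ "pt v i"] exI[of _ "pt v j"]) (auto simp: pt_eq_iff)
  qed
  show ?thesis unfolding simple_graph_def extG_def fst_conv snd_conv W_def[symmetric] ball_Un
    using fW e1 e2 by (intro conjI)
qed

lemma pE_ok:
  assumes "b \<le> n"
  shows "\<forall>e\<in>pE v a b. \<exists>i j. e = {pt v i, pt v j} \<and> i \<noteq> j \<and> i \<le> n \<and> j \<le> n"
proof
  fix e assume "e \<in> pE v a b"
  then obtain i where i: "i \<in> {a..<b}" "e = {pt v i, pt v (Suc i)}" unfolding pE_def by blast
  thus "\<exists>i j. e = {pt v i, pt v j} \<and> i \<noteq> j \<and> i \<le> n \<and> j \<le> n"
    using assms by (intro exI[of _ i] exI[of _ "Suc i"]) auto
qed

lemma single_ok: "i \<noteq> j \<Longrightarrow> i \<le> n \<Longrightarrow> j \<le> n \<Longrightarrow>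
   \<forall>e\<in>{{pt v i, pt v j}}. \<exists>i j. e = {pt v i, pt v j} \<and> i \<noteq> j \<and> i \<le> n \<and> j \<le> n"
  by (intro ballI exI[of _ i] exI[of _ j]) simp

lemma simple_Pg: "simple_graph A \<Longrightarrow> v \<in> fst A \<Longrightarrow> simple_graph (Pg A v n)"
  unfolding Pg_def by (rule simple_extG[OF _ _ pE_ok[OF order_refl]])

lemma simple_Zg: "simple_graph A \<Longrightarrow> v \<in> fst A \<Longrightarrow> 1 \<le> n \<Longrightarrow> simple_graph (Zg A v n)"
  unfolding Zg_def
  by (rule simple_extG) (simp_all only: ball_Un, intro conjI pE_ok[OF order_refl] single_ok, simp_all)

lemma simple_Tg: "simple_graph A \<Longrightarrow> v \<in> fst A \<Longrightarrow> 1 \<le> l \<Longrightarrow> l < n \<Longrightarrow> simple_graph (Tg A v n l)"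
  unfolding Tg_def
  by (rule simple_extG) (simp_all only: ball_Un, intro conjI pE_ok single_ok, simp_all)

definition gimg :: "('x \<Rightarrow> 'y) \<Rightarrow> 'x graph \<Rightarrow> 'y graph" where
  "gimg f G = (f ` fst G, (\<lambda>e. f ` e) ` snd G)"

lemma chrom_gimg: "simple_graph G \<Longrightarrow> inj_on f (fst G) \<Longrightarrow> chrom_sym (gimg f G) = chrom_sym G"
  unfolding gimg_def by (rule chrom_image)

lemma cyc_split:
  assumes "1 \<le> N"
  shows "(\<lambda>i. F i (Suc i mod N)) ` {..<N} = (\<lambda>i. F i (Suc i)) ` {..<N-1} \<union> {F (N-1) 0}"
proof -
  have "{..<N} = {..<N-1} \<union> {N-1}" using assms by auto
  hence "(\<lambda>i. F i (Suc i mod N)) ` {..<N} = (\<lambda>i. F i (Suc i mod N)) ` {..<N-1} \<union> {F (N-1) (Suc (N-1) mod N)}"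
    by simp
  moreover have "(\<lambda>i. F i (Suc i mod N)) ` {..<N-1} = (\<lambda>i. F i (Suc i)) ` {..<N-1}"
    by (rule image_cong) auto
  moreover have "Suc (N-1) mod N = 0" using assms by simp
  ultimately show ?thesis by simp
qed

lemma shift_img:
  "(\<lambda>i. F (i - l) (Suc i - l)) ` {l..<n} = (\<lambda>j. F j (Suc j)) ` {..<n-l}"
proof -
  have "{l..<n} = (\<lambda>j. j + l) ` {..<n-l}"
  proof
    show "{l..<n} \<subseteq> (\<lambda>j. j + l) ` {..<n-l}"
    proof
      fix i assume "i \<in> {l..<n}"
      hence "i = (i - l) + l" "i - l \<in> {..<n-l}" by auto
      thus "i \<in> (\<lambda>j. j + l) ` {..<n-l}" by (metis image_eqI)
    qed
  qed auto
  hence "(\<lambda>i. F (i - l) (Suc i - l)) ` {l..<n} = (\<lambda>i. F (i - l) (Suc i - l)) ` (\<lambda>j. j + l) ` {..<n-l}"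
    by simp
  also have "\<dots> = (\<lambda>j. F j (Suc j)) ` {..<n-l}" by (simp add: image_image Suc_diff_le)
  finally show ?thesis .
qed

definition psi :: "nat \<Rightarrow> 'v + nat \<Rightarrow> ('v + nat) + nat" where
  "psi l x = (case x of Inl a \<Rightarrow> Inl (Inl a) | Inr i \<Rightarrow> if i < l then Inl (Inr i) else Inr (i - l))"

lemma psi_pt: "1 \<le> l \<Longrightarrow> psi l (pt v i) = (if i < l then Inl (pt v i) else Inr (i - l))"
  by (auto simp: psi_def pt_def)

lemma inj_psi: "inj (psi l)"
proof (rule injI)
  fix x y assume "psi l x = psi l y"
  thus "x = y" by (cases x; cases y) (auto simp: psi_def split: if_splits)
qed

lemma DU_Tg:
  fixes A :: "'v graph" and v :: 'v
  assumes l: "1 \<le> l" "l < n"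
  shows "DU (Pg A v (l-1)) (fst (cycle_graph (n - l + 1))) = gimg (psi l) (Tg A v n l)"
proof -
  define N where "N = n - l + 1"
  have N: "1 \<le> N" "N - 1 = n - l" using l by (auto simp: N_def)
  have V: "Inl ` (Inl ` fst A \<union> Inr ` {1..l-1}) \<union> Inr ` {0..<N} = psi l ` (Inl ` fst A \<union> Inr ` {1..n})"
  proof -
    have "psi l ` (Inl ` fst A \<union> Inr ` {1..n}) = Inl ` Inl ` fst A \<union> (\<lambda>i. psi l (Inr i :: 'v + nat)) ` {1..n}"
      by (simp add: image_Un image_image psi_def)
    moreover have "{1..n} = {1..l-1} \<union> {l..n}" using l by auto
    moreover have "(\<lambda>i. psi l (Inr i :: 'v + nat)) ` {1..l-1} = Inl ` Inr ` {1..l-1}"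
      by (auto simp: psi_def image_image)
    moreover have "(\<lambda>i. psi l (Inr i :: 'v + nat)) ` {l..n} = Inr ` {0..<N}"
    proof
      show "(\<lambda>i. psi l (Inr i :: 'v + nat)) ` {l..n} \<subseteq> Inr ` {0..<N}" using l by (auto simp: psi_def N_def)
      show "Inr ` {0..<N} \<subseteq> (\<lambda>i. psi l (Inr i :: 'v + nat)) ` {l..n}"
      proof
        fix x assume "x \<in> (Inr ` {0..<N} :: (('v + nat) + nat) set)"
        then obtain j where j: "x = Inr j" "j < N" by auto
        hence "x = psi l (Inr (j + l))" "j + l \<in> {l..n}" using l by (auto simp: psi_def N_def)
        thus "x \<in> (\<lambda>i. psi l (Inr i :: 'v + nat)) ` {l..n}" by blast
      qed
    qed
    ultimately show ?thesis by (simp add: image_Un Un_assoc)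
  qed
  have cyc: "{{i, Suc i mod N} |i. i < N} = (\<lambda>i. {i, Suc i mod N}) ` {..<N}" by auto
  have E: "(\<lambda>e. Inl ` e) ` ((\<lambda>e. Inl ` e) ` snd A \<union> pE v 0 (l - 1)) \<union> (\<lambda>e. Inr ` e) ` {{i, Suc i mod N} |i. i < N}
     = (\<lambda>e. psi l ` e) ` ((\<lambda>e. Inl ` e) ` snd A \<union> pE v 0 (l - 1) \<union> pE v l n \<union> {{pt v n, pt v l}})"
  proof -
    have e1: "(\<lambda>e. psi l ` e) ` (\<lambda>e. Inl ` e) ` snd A = (\<lambda>e. Inl ` e) ` (\<lambda>e. Inl ` e) ` snd A"
      by (simp add: image_image psi_def)
    have e2: "(\<lambda>e. psi l ` e) ` pE v 0 (l - 1) = (\<lambda>e. Inl ` e) ` pE v 0 (l - 1)"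
      unfolding pE_def image_image by (rule image_cong) (use l in \<open>auto simp: psi_pt\<close>)
    have e3: "(\<lambda>e. psi l ` e) ` (pE v l n \<union> {{pt v n, pt v l}}) = (\<lambda>e. Inr ` e) ` {{i, Suc i mod N} |i. i < N}"
    proof -
      have "(\<lambda>e. psi l ` e) ` pE v l n = (\<lambda>i. {Inr (i - l), Inr (Suc i - l)}) ` {l..<n}"
        unfolding pE_def image_image by (rule image_cong) (use l in \<open>auto simp: psi_pt\<close>)
      also have "\<dots> = (\<lambda>j. {Inr j, Inr (Suc j)}) ` {..<n-l}"
        by (rule shift_img[where F="\<lambda>a b. {Inr a, Inr b}"])
      finally have a: "(\<lambda>e. psi l ` e) ` pE v l n = (\<lambda>j. {Inr j, Inr (Suc j)}) ` {..<n-l}" .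
      have b: "psi l ` {pt v n, pt v l} = {Inr (n - l), Inr 0}" using l by (simp add: psi_pt)
      have c: "(\<lambda>e. Inr ` e) ` {{i, Suc i mod N} |i. i < N} = (\<lambda>i. {Inr i, Inr (Suc i mod N)}) ` {..<N}"
        unfolding cyc image_image by simp
      show ?thesis unfolding image_Un a c cyc_split[OF N(1), where F="\<lambda>a b. {Inr a, Inr b}"] N(2)
        using b by simp
    qed
    have e3': "(\<lambda>e. psi l ` e) ` pE v l n \<union> (\<lambda>e. psi l ` e) ` {{pt v n, pt v l}}
        = (\<lambda>e. Inr ` e) ` {{i, Suc i mod N} |i. i < N}" using e3 by (simp only: image_Un)
    show ?thesis by (simp only: image_Un Un_assoc e1 e2 e3')
  qed
  show ?thesis unfolding DU_def gimg_def Pg_def Tg_def extG_def cycle_graph_def fst_conv snd_conv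
    N_def[symmetric] using V E by (simp add: Un_assoc)
qed

definition f1 :: "nat \<Rightarrow> ('a, 'b, 'c) spv + nat \<Rightarrow> ('a, 'b, 'c) spv" where
  "f1 k x = (case x of Inl a \<Rightarrow> a | Inr i \<Rightarrow> Leg 3 (k + i))"

lemma f1_pt: "f1 k (pt (legpos 3 k) i) = legpos 3 (k + i)"
  by (auto simp: f1_def pt_def legpos_def)

lemma f1_Inl[simp]: "f1 k (Inl a) = a"
  by (simp add: f1_def)

lemma leg_verts_add: "leg_verts 3 (k + j) = leg_verts 3 k \<union> (\<lambda>i. Leg 3 (k + i)) ` {1..j}"
proof -
  have "{1..k+j} = {1..k} \<union> (\<lambda>i. k + i) ` {1..j}"
  proof
    show "{1..k+j} \<subseteq> {1..k} \<union> (\<lambda>i. k + i) ` {1..j}"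
    proof
      fix x assume x: "x \<in> {1..k+j}"
      show "x \<in> {1..k} \<union> (\<lambda>i. k + i) ` {1..j}"
      proof (cases "x \<le> k")
        case True thus ?thesis using x by auto
      next
        case False
        hence "x = k + (x - k)" "x - k \<in> {1..j}" using x by auto
        thus ?thesis by (metis UnI2 image_eqI)
      qed
    qed
  qed auto
  hence "leg_verts 3 (k+j) = Leg 3 ` ({1..k} \<union> (\<lambda>i. k+i) ` {1..j})" unfolding leg_verts_eq by (simp only:)
  also have "\<dots> = Leg 3 ` {1..k} \<union> (\<lambda>i. Leg 3 (k+i)) ` {1..j}" by (simp only: image_Un image_image)
  finally show ?thesis by (simp only: leg_verts_eq)
qed

lemma leg_edges_add: "leg_edges 3 (k + j) = leg_edges 3 k \<union> (\<lambda>i. {legpos 3 (k + i), legpos 3 (k + Suc i)}) ` {..<j}"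
proof -
  have "{..<k+j} = {..<k} \<union> (\<lambda>i. k + i) ` {..<j}"
  proof
    show "{..<k+j} \<subseteq> {..<k} \<union> (\<lambda>i. k + i) ` {..<j}"
    proof
      fix x assume x: "x \<in> {..<k+j}"
      show "x \<in> {..<k} \<union> (\<lambda>i. k + i) ` {..<j}"
      proof (cases "x < k")
        case True thus ?thesis by auto
      next
        case False
        hence "x = k + (x - k)" "x - k \<in> {..<j}" using x by auto
        thus ?thesis by (metis UnI2 image_eqI)
      qed
    qed
  qed auto
  hence "leg_edges 3 (k+j) = (\<lambda>j. {legpos 3 j, legpos 3 (Suc j)}) ` ({..<k} \<union> (\<lambda>i. k+i) ` {..<j})"
    unfolding leg_edges_eq by (simp only:)
  also have "\<dots> = (\<lambda>j. {legpos 3 j, legpos 3 (Suc j)}) ` {..<k} \<union> (\<lambda>i. {legpos 3 (k + i), legpos 3 (Suc (k + i))}) ` {..<j}"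
    by (simp only: image_Un image_image)
  finally show ?thesis by (simp only: leg_edges_eq add_Suc_right)
qed

lemma spider2_Pg:
  "spider2 g h (k + j) G H = gimg (f1 k) (Pg (spider2 g h k G H) (legpos 3 k) j)"
proof -
  have V: "f1 k ` (Inl ` (SV g h G H \<union> leg_verts 3 k) \<union> Inr ` {1..j}) = SV g h G H \<union> leg_verts 3 (k + j)"
  proof -
    have a: "f1 k ` Inl ` X = X" for X :: "('a, 'b, 'c) spv set" by (simp add: image_image)
    have b: "f1 k ` Inr ` S = (\<lambda>i. Leg 3 (k + i)) ` S" for S by (simp add: image_image f1_def)
    show ?thesis unfolding leg_verts_add by (simp only: image_Un Un_assoc a b)
  qed
  have E1: "(\<lambda>e. f1 k ` e) ` (\<lambda>e. Inl ` e) ` X = X" for X :: "('a, 'b, 'c) spv set set"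
    by (simp add: image_image)
  have E2: "(\<lambda>e. f1 k ` e) ` pE (legpos 3 k) 0 j = (\<lambda>i. {legpos 3 (k + i), legpos 3 (k + Suc i)}) ` {..<j}"
    unfolding pE_def image_image by (simp add: f1_pt atLeast0LessThan)
  have "fst (gimg (f1 k) (Pg (spider2 g h k G H) (legpos 3 k) j)) = SV g h G H \<union> leg_verts 3 (k + j)"
    unfolding gimg_def Pg_def extG_def spider2_eq fst_conv by (rule V)
  moreover have "snd (gimg (f1 k) (Pg (spider2 g h k G H) (legpos 3 k) j)) = SE g h G H \<union> leg_edges 3 (k + j)"
    unfolding gimg_def Pg_def extG_def spider2_eq fst_conv snd_conv leg_edges_add
    by (simp only: image_Un E1 E2 Un_assoc)
  ultimately show ?thesis unfolding spider2_eq by (metis prod.collapse)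
qed

lemma inj_f1: "inj_on (f1 k) (fst (Pg (spider2 g h k G H) (legpos 3 k) j))"
proof (rule inj_onI)
  fix x y
  assume x: "x \<in> fst (Pg (spider2 g h k G H) (legpos 3 k) j)" and y: "y \<in> fst (Pg (spider2 g h k G H) (legpos 3 k) j)"
    and eq: "f1 k x = f1 k y"
  have A: "Leg 3 (k + i) \<notin> SV g h G H \<union> leg_verts 3 k" if "1 \<le> i" for i
    using that Leg3_notin_SV[of "k+i" g h G H] by (auto simp: leg_verts_def)
  show "x = y"
  proof (cases x)
    case (Inl a) note xa = this
    show ?thesis
    proof (cases y)
      case (Inl b) thus ?thesis using xa eq by simp
    next
      case (Inr i)
      hence "1 \<le> i" using y by (auto simp: Pg_def extG_def)
      moreover have "a \<in> SV g h G H \<union> leg_verts 3 k" using x xa by (auto simp: Pg_def extG_def spider2_eq)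
      ultimately show ?thesis using eq xa Inr A by (auto simp: f1_def)
    qed
  next
    case (Inr i) note xi = this
    show ?thesis
    proof (cases y)
      case (Inl b)
      hence "b \<in> SV g h G H \<union> leg_verts 3 k" using y by (auto simp: Pg_def extG_def spider2_eq)
      moreover have "1 \<le> i" using x xi by (auto simp: Pg_def extG_def)
      ultimately show ?thesis using eq xi Inl A by (auto simp: f1_def)
    next
      case (Inr i') thus ?thesis using xi eq by (simp add: f1_def)
    qed
  qed
qed

definition conv :: "('a, 'b, unit) spv \<Rightarrow> ('a, 'b, nat) spv" where
  "conv x = (case x of Ctr \<Rightarrow> Ctr | Leg i j \<Rightarrow> Leg i j | In1 a \<Rightarrow> In1 a | In2 b \<Rightarrow> In2 b | In3 c \<Rightarrow> In3 0)"

lemma conv_simps[simp]: "conv Ctr = Ctr" "conv (Leg i j) = Leg i j" "conv (In1 a) = In1 a" "conv (In2 b) = In2 b"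
  "conv (In3 c) = In3 0"
  by (simp_all add: conv_def)

lemma conv_legpos[simp]: "conv (legpos i j) = legpos i j"
  by (simp add: legpos_def)

lemma conv_emb[simp]: "conv (sp_emb In1 i t r x) = sp_emb In1 i t r x" "conv (sp_emb In2 i t r y) = sp_emb In2 i t r y"
  by (simp_all add: sp_emb_def)

lemma inj_conv: "inj conv"
proof (rule injI)
  fix x y :: "('a, 'b, unit) spv" assume "conv x = conv y"
  thus "x = y" by (cases x; cases y) auto
qed

lemma conv_leg_verts: "conv ` leg_verts i t = leg_verts i t"
  unfolding leg_verts_eq by (simp add: image_image)

lemma conv_leg_edges: "(\<lambda>e. conv ` e) ` leg_edges i t = leg_edges i t"
  unfolding leg_edges_eq by (simp add: image_image)

lemma conv_SV: "conv ` SV g h G H = SV g h G H"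
  unfolding SV_def image_Un conv_leg_verts by (simp add: image_image)

lemma conv_SE: "(\<lambda>e. conv ` e) ` SE g h G H = SE g h G H"
  unfolding SE_def image_Un conv_leg_edges by (simp add: image_image)

definition f2 :: "('a, 'b, unit) spv + nat \<Rightarrow> ('a, 'b, nat) spv" where
  "f2 x = (case x of Inl a \<Rightarrow> conv a | Inr i \<Rightarrow> In3 i)"

lemma f2_pt: "f2 (pt (legpos 3 k) i) = sp_emb In3 3 k 0 i"
  by (auto simp: f2_def pt_def sp_emb_def)

lemma spider_Zg:
  assumes m: "m \<ge> 2"
  shows "spider g h k G H (cycle_graph m) = gimg f2 (Zg (spider2 g h k G H) (legpos 3 k) (m - 1))"
proof -
  have a: "{1..m-1} = {1..<m}" using m by auto
  have b: "f2 ` Inl ` X = conv ` X" for X by (simp add: image_image f2_def)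
  have c: "f2 ` Inr ` S = In3 ` S" for S by (simp add: image_image f2_def)
  have V: "f2 ` (Inl ` (SV g h G H \<union> leg_verts 3 k) \<union> Inr ` {1..m-1}) = SV g h G H \<union> leg_verts 3 k \<union> In3 ` {1..<m}"
    by (simp only: image_Un conv_SV conv_leg_verts a b c)
  have E1: "(\<lambda>e. f2 ` e) ` (\<lambda>e. Inl ` e) ` X = (\<lambda>e. conv ` e) ` X" for X :: "('a, 'b, unit) spv set set"
    by (simp add: image_image f2_def)
  have E2: "(\<lambda>e. f2 ` e) ` pE (legpos 3 k) 0 (m-1) = (\<lambda>i. {sp_emb In3 3 k 0 i, sp_emb In3 3 k 0 (Suc i)}) ` {..<m-1}"
    unfolding pE_def image_image by (simp add: f2_pt atLeast0LessThan)
  have E3: "(\<lambda>e. f2 ` e) ` {{pt (legpos 3 k) (m-1), pt (legpos 3 k) 0}} = {{sp_emb In3 3 k 0 (m-1), sp_emb In3 3 k 0 0}}"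
    by (simp add: f2_pt)
  have m1: "1 \<le> m" using m by simp
  have "fst (gimg f2 (Zg (spider2 g h k G H) (legpos 3 k) (m - 1))) = SV g h G H \<union> leg_verts 3 k \<union> In3 ` {1..<m}"
    unfolding gimg_def Zg_def extG_def spider2_eq fst_conv by (rule V)
  moreover have "snd (gimg f2 (Zg (spider2 g h k G H) (legpos 3 k) (m - 1))) = SE g h G H \<union> leg_edges 3 k
      \<union> (\<lambda>i. {sp_emb In3 3 k 0 i, sp_emb In3 3 k 0 (Suc i mod m)}) ` {..<m}"
    unfolding gimg_def Zg_def extG_def spider2_eq fst_conv snd_conv
      cyc_split[OF m1, where F="\<lambda>a b. {sp_emb In3 3 k 0 a, sp_emb In3 3 k 0 b}"]
    by (simp only: image_Un E1 E2 E3 conv_SE conv_leg_edges Un_assoc)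
  ultimately show ?thesis unfolding spider_cyc_eq[OF m] by (metis prod.collapse)
qed

lemma inj_f2: "inj_on f2 (fst (Zg (spider2 g h k G H) (legpos 3 k) n))"
proof (rule inj_onI)
  fix x y
  assume x: "x \<in> fst (Zg (spider2 g h k G H) (legpos 3 k) n)" and y: "y \<in> fst (Zg (spider2 g h k G H) (legpos 3 k) n)"
    and eq: "f2 x = f2 y"
  have c: "conv a \<noteq> In3 i" if "1 \<le> i" for a :: "('a, 'b, unit) spv" and i
    using that by (cases a) auto
  show "x = y"
  proof (cases x)
    case (Inl a) note xa = this
    show ?thesis
    proof (cases y)
      case (Inl b) thus ?thesis using xa eq by (simp add: f2_def inj_eq[OF inj_conv])
    next
      case (Inr i)
      hence "1 \<le> i" using y by (auto simp: Zg_def extG_def)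
      from c[OF this, of a] show ?thesis using eq xa Inr by (auto simp: f2_def)
    qed
  next
    case (Inr i) note xi = this
    show ?thesis
    proof (cases y)
      case (Inl b)
      have "1 \<le> i" using x xi by (auto simp: Zg_def extG_def)
      from c[OF this, of b] show ?thesis using eq xi Inl by (auto simp: f2_def)
    next
      case (Inr i') thus ?thesis using xi eq by (simp add: f2_def)
    qed
  qed
qed

theorem theorem4p8:
  fixes G :: "'a rgraph" and H :: "'b rgraph" and g h k m :: nat
  assumes "rooted_graph G" and "rooted_graph H" and "m \<ge> 2"
  shows "chrom_sym (spider g h k G H (cycle_graph m)) =
    (\<lambda>\<alpha>. int (m - 1) * chrom_sym (spider2 g h (k + m - 1) G H) \<alpha>
       - (\<Sum>l = 1..m - 2. sf_mult (chrom_sym (spider2 g h (k + l - 1) G H))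
                                  (chrom_sym (fst (cycle_graph (m - l)))) \<alpha>))"
proof -
  note G = assms(1) and H = assms(2) and m = assms(3)
  define A where "A = spider2 g h k G H"
  define v :: "('a, 'b, unit) spv" where "v = legpos 3 k"
  define n where "n = m - 1"
  have n1: "1 \<le> n" using m by (simp add: n_def)
  have sA: "simple_graph A" unfolding A_def by (rule simple_spider2[OF G H])
  have fA: "finite (fst A)" unfolding A_def by (rule finite_spider2[OF G H])
  have vA: "v \<in> fst A" unfolding A_def v_def by (rule v_in_spider2)
  have LHS: "chrom_sym (spider g h k G H (cycle_graph m)) = chrom_sym (Zg A v n)"
    unfolding spider_Zg[OF m] A_def v_def n_def
    by (rule chrom_gimg[OF simple_Zg[OF sA[unfolded A_def] vA[unfolded A_def v_def]] inj_f2]) (use m in simp)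
  have P: "chrom_sym (spider2 g h (k + j) G H) = chrom_sym (Pg A v j)" for j
    unfolding spider2_Pg[of g h k j G H] A_def v_def
    by (rule chrom_gimg[OF simple_Pg[OF sA[unfolded A_def] vA[unfolded A_def v_def]] inj_f1])
  have T: "sf_mult (chrom_sym (spider2 g h (k + l - 1) G H)) (chrom_sym (fst (cycle_graph (m - l))))
      = chrom_sym (Tg A v n l)" if l: "l \<in> {1..m-2}" for l
  proof -
    have l1: "1 \<le> l" "l < n" using l m by (auto simp: n_def)
    have "k + l - 1 = k + (l - 1)" "m - l = n - l + 1" using l1 by (auto simp: n_def)
    hence "sf_mult (chrom_sym (spider2 g h (k + l - 1) G H)) (chrom_sym (fst (cycle_graph (m - l))))
        = sf_mult (chrom_sym (Pg A v (l - 1))) (chrom_sym (fst (cycle_graph (n - l + 1))))"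
      using P by simp
    also have "\<dots> = chrom_sym (DU (Pg A v (l - 1)) (fst (cycle_graph (n - l + 1))))"
      by (rule chrom_DU) (use fA in \<open>simp_all add: Pg_def extG_def cycle_graph_def\<close>)
    also have "\<dots> = chrom_sym (gimg (psi l) (Tg A v n l))" by (simp only: DU_Tg[OF l1])
    also have "\<dots> = chrom_sym (Tg A v n l)"
      by (rule chrom_gimg[OF simple_Tg[OF sA vA l1]]) (rule inj_on_subset[OF inj_psi subset_UNIV])
    finally show ?thesis .
  qed
  show ?thesis
  proof
    fix \<alpha>
    have "k + m - 1 = k + n" using m by (simp add: n_def)
    hence P': "chrom_sym (spider2 g h (k + m - 1) G H) = chrom_sym (Pg A v n)" using P by simp
    have "m - 2 = n - 1" by (simp add: n_def)
    hence S: "(\<Sum>l = 1..m - 2. sf_mult (chrom_sym (spider2 g h (k + l - 1) G H))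
                                  (chrom_sym (fst (cycle_graph (m - l)))) \<alpha>)
        = (\<Sum>l = 1..n - 1. chrom_sym (Tg A v n l) \<alpha>)"
      using T by (intro sum.cong) auto
    show "chrom_sym (spider g h k G H (cycle_graph m)) \<alpha> =
      int (m - 1) * chrom_sym (spider2 g h (k + m - 1) G H) \<alpha>
       - (\<Sum>l = 1..m - 2. sf_mult (chrom_sym (spider2 g h (k + l - 1) G H))
                                  (chrom_sym (fst (cycle_graph (m - l)))) \<alpha>)"
      unfolding LHS P' S n_def[symmetric] by (rule core[OF fA n1])
  qed
qed

end
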